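(* For every $n\in\mathbb N$ there is a deterministic online monotone embedding (which may depend on $n$) of up to $n$ points from any metric space into HSTs with distortion $n-1$, and this is tight: no deterministic online monotone embedding of up to $n$ points from all metric spaces into HSTs achieves distortion less than $n-1$. Without prior knowledge of $n$ (i.e., a single embedding used for all $n$), the optimal achievable distortion for sequences of $n$ points is $n\cdot\tilde\Theta(\log n)$, where $\tilde\Theta$ hides factors polylogarithmic in $\log n$; this bound is also tight.
   Context: For $\mu \ge 1$, a $\mu$-HST is a metric space whose points are the leaves of a rooted tree $T$; every node $v$ has a weight $\varphi(v)\ge 0$, with $\varphi(v)=0$ iff $v$ is a leaf, and $\varphi(v)\le\varphi(u)/\mu$ whenever $v$ is a child of $u$; the distance between leaves $u,v$ is $\varphi(\mathrm{lca}(u,v))$. "HSTs" denotes the family of such metrics. An update sequence on $(X,d_X)$ is a sequence of pairs $(v_t,o_t)\in X\times\{+,-\}$ ($v_t$ arrives if $o_t=+$, leaves if $o_t=-$), with alive sets $L_0=\varnothing$, $L_t=L_{t-1}\cup\{v_t\}$ or $L_{t-1}\setminus\{v_t\}$ accordingly. A deterministic online monotone embedding into a family $\mathcal M$ receives $\sigma_1,\sigma_2,\dots$ one at a time and after $\sigma_t$ (depending only on $\sigma_1,\dots,\sigma_t$) outputs a metric $d_t$ on $L_t$ with: $(L_t,d_t)\in\mathcal M$; $d_t(u,v)\ge d_X(u,v)$ for all $u,v\in L_t$ (non-contractive); $d_t(u,v)\le d_{t-1}(u,v)$ for all $u,v\in L_{t-1}\cap L_t$. It has distortion $\lambda$ if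 $d_t(u,v)\le\lambda d_X(u,v)$ for all sequences in the considered class, all $t$, and all $u,v\in L_t$. "Up to $n$ points" refers to sequences in which at most $n$ points arrive. *)

theory Defs
  imports Complex_Main
begin

definition is_metric :: "('a \<Rightarrow> 'a \<Rightarrow> real) \<Rightarrow> bool" where
  "is_metric d \<longleftrightarrow>
     (\<forall>x y. d x y = 0 \<longleftrightarrow> x = y) \<and> (\<forall>x y. d x y = d y x) \<and>
     (\<forall>x y z. d x z \<le> d x y + d y z)"

text \<open>A finite rooted tree: node set N (of naturals), root r, parent map p
  (only meaningful on non-root nodes); every node reaches the root.\<close>

definition is_rooted_tree :: "nat set \<Rightarrow> nat \<Rightarrow> (nat \<Rightarrow> nat) \<Rightarrow> bool" where
  "is_rooted_tree N r p \<longleftrightarrow> finite N \<and> r \<in> N \<and>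
     (\<forall>v\<in>N. v \<noteq> r \<longrightarrow> p v \<in> N) \<and> (\<forall>v\<in>N. \<exists>k. (p ^^ k) v = r)"

text \<open>u is an ancestor of v (reflexive); the walk towards the root stops at r.\<close>
definition tree_anc :: "nat \<Rightarrow> (nat \<Rightarrow> nat) \<Rightarrow> nat \<Rightarrow> nat \<Rightarrow> bool" where
  "tree_anc r p u v \<longleftrightarrow> (\<exists>k. (p ^^ k) v = u \<and> (\<forall>j<k. (p ^^ j) v \<noteq> r))"

definition tree_leaf :: "nat set \<Rightarrow> nat \<Rightarrow> (nat \<Rightarrow> nat) \<Rightarrow> nat \<Rightarrow> bool" where
  "tree_leaf N r p v \<longleftrightarrow> v \<in> N \<and> \<not> (\<exists>w\<in>N. w \<noteq> r \<and> p w = v)"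

definition tree_lca :: "nat \<Rightarrow> (nat \<Rightarrow> nat) \<Rightarrow> nat \<Rightarrow> nat \<Rightarrow> nat" where
  "tree_lca r p u v = (THE w. tree_anc r p w u \<and> tree_anc r p w v \<and>
       (\<forall>w'. tree_anc r p w' u \<and> tree_anc r p w' v \<longrightarrow> tree_anc r p w' w))"

text \<open>(L, rho) is a mu-HST. The empty metric space is counted as an HST.\<close>
definition is_muHST :: "real \<Rightarrow> 'a set \<Rightarrow> ('a \<Rightarrow> 'a \<Rightarrow> real) \<Rightarrow> bool" where
  "is_muHST \<mu> L \<rho> \<longleftrightarrow> L = {} \<or>
     (\<exists>N r p \<phi> lf. is_rooted_tree N r p \<and>
        bij_betw lf L {v. tree_leaf N r p v} \<and>
        (\<forall>v\<in>N. \<phi> v \<ge> 0) \<and>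
        (\<forall>v\<in>N. \<phi> v = 0 \<longleftrightarrow> tree_leaf N r p v) \<and>
        (\<forall>v\<in>N. v \<noteq> r \<longrightarrow> \<phi> v \<le> \<phi> (p v) / \<mu>) \<and>
        (\<forall>x\<in>L. \<forall>y\<in>L. \<rho> x y = \<phi> (tree_lca r p (lf x) (lf y))))"

definition in_HSTs :: "'a set \<Rightarrow> ('a \<Rightarrow> 'a \<Rightarrow> real) \<Rightarrow> bool" where
  "in_HSTs L \<rho> \<longleftrightarrow> (\<exists>\<mu>\<ge>1. is_muHST \<mu> L \<rho>)"

text \<open>An update is a pair (v, o); o = True means arrival (+), False departure (-).\<close>
definition alive :: "('a \<times> bool) list \<Rightarrow> 'a set" where
  "alive \<sigma> = fold (\<lambda>(v, arr) L. if arr then insert v L else L - {v}) \<sigma> {}"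

definition upto :: "nat \<Rightarrow> ('a \<times> bool) list set" where
  "upto n = {\<sigma>. length (filter snd \<sigma>) \<le> n}"

text \<open>A deterministic online embedding E maps the prefix sigma_1..sigma_t to the
  metric d_t (relevant on alive points).\<close>
definition online_monotone_embedding ::
  "('a \<Rightarrow> 'a \<Rightarrow> real) \<Rightarrow> ('a \<times> bool) list set \<Rightarrow>
   (('a \<times> bool) list \<Rightarrow> 'a \<Rightarrow> 'a \<Rightarrow> real) \<Rightarrow> bool" where
  "online_monotone_embedding d S E \<longleftrightarrow>
     (\<forall>\<sigma>\<in>S. \<sigma> \<noteq> [] \<longrightarrow>
        in_HSTs (alive \<sigma>) (E \<sigma>) \<and>
        (\<forall>u\<in>alive \<sigma>. \<forall>v\<in>alive \<sigma>. d u v \<le> E \<sigma> u v) \<and>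
        (\<forall>u\<in>alive \<sigma> \<inter> alive (butlast \<sigma>). \<forall>v\<in>alive \<sigma> \<inter> alive (butlast \<sigma>).
            E \<sigma> u v \<le> E (butlast \<sigma>) u v))"

definition has_distortion ::
  "('a \<Rightarrow> 'a \<Rightarrow> real) \<Rightarrow> ('a \<times> bool) list set \<Rightarrow>
   (('a \<times> bool) list \<Rightarrow> 'a \<Rightarrow> 'a \<Rightarrow> real) \<Rightarrow> real \<Rightarrow> bool" where
  "has_distortion d S E lam \<longleftrightarrow>
     (\<forall>\<sigma>\<in>S. \<forall>u\<in>alive \<sigma>. \<forall>v\<in>alive \<sigma>. E \<sigma> u v \<le> lam * d u v)"

end

theory Submission
  imports Defs "HOL-Library.Nat_Bijection" "HOL-Library.Transitive_Closure_Table"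
begin


definition dep :: "nat \<Rightarrow> (nat \<Rightarrow> nat) \<Rightarrow> nat \<Rightarrow> nat" where
  "dep r p v = (LEAST k. (p ^^ k) v = r)"

lemma fp2: "(f ^^ a) ((f ^^ b) x) = (f ^^ (a + b)) x"
  by (simp add: funpow_add)

locale rtree =
  fixes N r p
  assumes T: "is_rooted_tree N r p"
begin

lemma dep_root: "v \<in> N \<Longrightarrow> (p ^^ dep r p v) v = r"
  using T unfolding is_rooted_tree_def dep_def by (meson LeastI)

lemma dep_less: "k < dep r p v \<Longrightarrow> (p ^^ k) v \<noteq> r"
  unfolding dep_def using not_less_Least by blast

lemma pow_inN: "v \<in> N \<Longrightarrow> k \<le> dep r p v \<Longrightarrow> (p ^^ k) v \<in> N"
proof (induction k)
  case 0 then show ?case by simp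
next
  case (Suc k)
  then have "(p ^^ k) v \<in> N" "(p ^^ k) v \<noteq> r" using dep_less by auto
  then show ?case using T unfolding is_rooted_tree_def by simp
qed

lemma dep_shift: assumes "v \<in> N" "k \<le> dep r p v" shows "dep r p ((p ^^ k) v) = dep r p v - k"
proof -
  have "(p ^^ (dep r p v - k)) ((p ^^ k) v) = r"
    using dep_root[OF assms(1)] assms(2) by (simp add: fp2)
  moreover have "(p ^^ j) ((p ^^ k) v) \<noteq> r" if "j < dep r p v - k" for j
    using dep_less[of "j + k" v] that by (simp add: fp2)
  ultimately have "(LEAST j. (p ^^ j) ((p ^^ k) v) = r) = dep r p v - k"
    by (intro Least_equality) (auto simp: not_le[symmetric])
  then show ?thesis by (simp add: dep_def)
qed

lemma anc_iff: assumes "v \<in> N"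
  shows "tree_anc r p u v \<longleftrightarrow> (\<exists>k\<le>dep r p v. u = (p ^^ k) v)"
proof
  assume "tree_anc r p u v"
  then obtain k where k: "(p ^^ k) v = u" "\<forall>j<k. (p ^^ j) v \<noteq> r" unfolding tree_anc_def by blast
  have "k \<le> dep r p v" using k(2) dep_root[OF assms] by (meson not_le)
  then show "\<exists>k\<le>dep r p v. u = (p ^^ k) v" using k by auto
next
  assume "\<exists>k\<le>dep r p v. u = (p ^^ k) v"
  then obtain k where "k \<le> dep r p v" "u = (p ^^ k) v" by blast
  moreover have "\<forall>j<k. (p ^^ j) v \<noteq> r" 
  proof (intro allI impI)
    fix j assume "j < k"
    then show "(p ^^ j) v \<noteq> r" using dep_less[of j v] \<open>k \<le> dep r p v\<close> by auto
  qed
  ultimately show "tree_anc r p u v" unfolding tree_anc_def by blast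
qed

lemma anc_inN: assumes "v \<in> N" "tree_anc r p u v" shows "u \<in> N"
proof -
  obtain k where "k \<le> dep r p v" "u = (p ^^ k) v" using assms anc_iff by blast
  then show ?thesis using pow_inN assms by blast
qed

lemma anc_refl: assumes "v \<in> N" shows "tree_anc r p v v"
proof -
  have "v = (p ^^ 0) v" by simp
  then show ?thesis using anc_iff[OF assms, of v] by blast
qed

lemma anc_trans: assumes "v \<in> N" "tree_anc r p u v" "tree_anc r p w u" shows "tree_anc r p w v"
proof -
  obtain k where k: "k \<le> dep r p v" "u = (p ^^ k) v" using assms anc_iff by blast
  have uN: "u \<in> N" using k pow_inN assms by blast
  obtain j where j: "j \<le> dep r p u" "w = (p ^^ j) u" using assms(3) anc_iff[OF uN] by blast
  have "dep r p u = dep r p v - k" using dep_shift k assms by blast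
  then have "j + k \<le> dep r p v" "w = (p ^^ (j + k)) v" using j k by (auto simp: funpow_add)
  then show ?thesis using anc_iff[OF assms(1)] by blast
qed

lemma anc_antisym: assumes "v \<in> N" "tree_anc r p u v" "tree_anc r p v u" shows "u = v"
proof -
  obtain k where k: "k \<le> dep r p v" "u = (p ^^ k) v" using assms anc_iff by blast
  have uN: "u \<in> N" using k pow_inN assms by blast
  obtain j where j: "j \<le> dep r p u" "v = (p ^^ j) u" using assms(3) anc_iff[OF uN] by blast
  have du: "dep r p u = dep r p v - k" using dep_shift k assms by blast
  have "dep r p v = dep r p u - j" using dep_shift j uN by metis
  then have "k = 0" using du k j by linarith
  then show ?thesis using k by simp
qed

lemma anc_total: assumes "v \<in> N" "tree_anc r p u v" "tree_anc r p w v"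
  shows "tree_anc r p u w \<or> tree_anc r p w u"
proof -
  obtain k where k: "k \<le> dep r p v" "u = (p ^^ k) v" using assms anc_iff by blast
  obtain j where j: "j \<le> dep r p v" "w = (p ^^ j) v" using assms anc_iff by blast
  have uN: "u \<in> N" using k pow_inN assms by blast
  have wN: "w \<in> N" using j pow_inN assms by blast
  show ?thesis
  proof (cases "k \<le> j")
    case True
    have "w = (p ^^ (j - k)) u" using True j k by (simp add: fp2)
    moreover have "j - k \<le> dep r p u" using dep_shift k assms j by simp
    ultimately show ?thesis using anc_iff[OF uN] by blast
  next
    case False
    have "u = (p ^^ (k - j)) w" using False j k by (simp add: fp2)
    moreover have "k - j \<le> dep r p w" using dep_shift j assms k by simp
    ultimately show ?thesis using anc_iff[OF wN] by blast
  qed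
qed

definition lcaP where "lcaP a c w \<longleftrightarrow> tree_anc r p w a \<and> tree_anc r p w c \<and>
       (\<forall>w'. tree_anc r p w' a \<and> tree_anc r p w' c \<longrightarrow> tree_anc r p w' w)"

lemma lcaP_unique: "a \<in> N \<Longrightarrow> lcaP a c w \<Longrightarrow> lcaP a c w' \<Longrightarrow> w = w'"
  unfolding lcaP_def by (meson anc_antisym anc_inN)

lemma lcaP_exists: assumes "a \<in> N" "c \<in> N" shows "\<exists>w. lcaP a c w"
proof -
  define K where "K = (LEAST k. k \<le> dep r p a \<and> tree_anc r p ((p ^^ k) a) c)"
  have ex: "dep r p a \<le> dep r p a \<and> tree_anc r p ((p ^^ dep r p a) a) c"
    using dep_root[OF assms(1)] dep_root[OF assms(2)] anc_iff[OF assms(2)] by auto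
  then have K: "K \<le> dep r p a" "tree_anc r p ((p ^^ K) a) c"
    unfolding K_def by (metis (mono_tags, lifting) LeastI)+
  have "lcaP a c ((p ^^ K) a)"
    unfolding lcaP_def
  proof (intro conjI allI impI)
    show "tree_anc r p ((p ^^ K) a) a" using K anc_iff[OF assms(1)] by blast
    show "tree_anc r p ((p ^^ K) a) c" by (fact K(2))
    fix w' assume w': "tree_anc r p w' a \<and> tree_anc r p w' c"
    then obtain k' where k': "k' \<le> dep r p a" "w' = (p ^^ k') a" using anc_iff[OF assms(1)] by blast
    then have "K \<le> k'" unfolding K_def using w' by (simp add: Least_le)
    have wN: "(p ^^ K) a \<in> N" using pow_inN K assms by blast
    have "w' = (p ^^ (k' - K)) ((p ^^ K) a)" using \<open>K \<le> k'\<close> k' by (simp add: fp2)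
    moreover have "k' - K \<le> dep r p ((p ^^ K) a)" using dep_shift K assms k' by simp
    ultimately show "tree_anc r p w' ((p ^^ K) a)" using anc_iff[OF wN] by blast
  qed
  then show ?thesis by blast
qed

lemma lca_prop: "a \<in> N \<Longrightarrow> c \<in> N \<Longrightarrow> lcaP a c (tree_lca r p a c)"
  unfolding tree_lca_def lcaP_def[symmetric]
  by (metis lcaP_exists lcaP_unique theI)

lemma lca_eq: "a \<in> N \<Longrightarrow> c \<in> N \<Longrightarrow> lcaP a c w \<Longrightarrow> tree_lca r p a c = w"
  using lca_prop lcaP_unique by blast

lemma phi_mono: assumes "\<forall>x\<in>N. x \<noteq> r \<longrightarrow> \<phi> x \<le> (\<phi> (p x) :: real)" "v \<in> N" "tree_anc r p u v"
  shows "\<phi> v \<le> \<phi> u"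
proof -
  obtain k where k: "k \<le> dep r p v" "u = (p ^^ k) v" using assms anc_iff by blast
  have "\<phi> v \<le> \<phi> ((p ^^ k) v)" using k(1)
  proof (induction k)
    case 0 then show ?case by simp
  next
    case (Suc k)
    then have "(p ^^ k) v \<in> N" "(p ^^ k) v \<noteq> r" using dep_less pow_inN assms by auto
    then show ?case using Suc assms(1) by fastforce
  qed
  then show ?thesis using k by simp
qed

end

lemma leaf_inN: "tree_leaf N r p v \<Longrightarrow> v \<in> N" unfolding tree_leaf_def by simp

lemma hst_props:
  assumes H: "is_muHST \<mu> L \<rho>" and mu: "\<mu> \<ge> 1"
  shows "\<forall>x\<in>L. \<rho> x x = 0" "\<forall>x\<in>L. \<forall>y\<in>L. \<forall>z\<in>L. \<rho> x z \<le> max (\<rho> x y) (\<rho> y z)"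
proof -
  have "(\<forall>x\<in>L. \<rho> x x = 0) \<and> (\<forall>x\<in>L. \<forall>y\<in>L. \<forall>z\<in>L. \<rho> x z \<le> max (\<rho> x y) (\<rho> y z))"
  proof (cases "L = {}")
    case True then show ?thesis by simp
  next
    case False
    then obtain N r p \<phi> lf where T: "is_rooted_tree N r p" and
        bij: "bij_betw lf L {v. tree_leaf N r p v}" and
        pos: "\<forall>v\<in>N. \<phi> v \<ge> 0" and z: "\<forall>v\<in>N. \<phi> v = 0 \<longleftrightarrow> tree_leaf N r p v" and
        dec: "\<forall>v\<in>N. v \<noteq> r \<longrightarrow> \<phi> v \<le> \<phi> (p v) / \<mu>" and
        rho: "\<forall>x\<in>L. \<forall>y\<in>L. \<rho> x y = \<phi> (tree_lca r p (lf x) (lf y))"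
      using H unfolding is_muHST_def by blast
    interpret rtree N r p by (simp add: rtree_def T)
    have lfN: "x \<in> L \<Longrightarrow> lf x \<in> N" for x using bij leaf_inN unfolding bij_betw_def by blast
    have dec1: "\<forall>x\<in>N. x \<noteq> r \<longrightarrow> \<phi> x \<le> \<phi> (p x)"
    proof (intro ballI impI)
      fix x assume "x \<in> N" "x \<noteq> r"
      then have "p x \<in> N" using T unfolding is_rooted_tree_def by blast
      then have "\<phi> (p x) / \<mu> \<le> \<phi> (p x)" using pos mu divide_left_mono[of 1 \<mu> "\<phi> (p x)"] by simp
      then show "\<phi> x \<le> \<phi> (p x)" using dec \<open>x \<in> N\<close> \<open>x \<noteq> r\<close> by fastforce
    qed
    have A: "\<forall>x\<in>L. \<rho> x x = 0"
    proof
      fix x assume x: "x \<in> L"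
      have "lcaP (lf x) (lf x) (lf x)" unfolding lcaP_def using anc_refl lfN x by blast
      then have "tree_lca r p (lf x) (lf x) = lf x" using lca_eq lfN x by blast
      moreover have "tree_leaf N r p (lf x)" using bij x unfolding bij_betw_def by blast
      ultimately show "\<rho> x x = 0" using rho x z lfN by simp
    qed
    have B: "\<forall>x\<in>L. \<forall>y\<in>L. \<forall>z\<in>L. \<rho> x z \<le> max (\<rho> x y) (\<rho> y z)"
    proof (intro ballI)
      fix x y z assume xyz: "x \<in> L" "y \<in> L" "z \<in> L"
      define a b c where "a = lf x" "b = lf y" "c = lf z"
      have N: "a \<in> N" "b \<in> N" "c \<in> N" using lfN xyz a_b_c_def by auto
      define w1 w2 w3 where "w1 = tree_lca r p a b" "w2 = tree_lca r p b c" "w3 = tree_lca r p a c"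
      have P1: "lcaP a b w1" and P2: "lcaP b c w2" and P3: "lcaP a c w3"
        using lca_prop N w1_w2_w3_def by auto
      have w3N: "w3 \<in> N" using P3 N anc_inN unfolding lcaP_def by blast
      have "tree_anc r p w1 w2 \<or> tree_anc r p w2 w1"
        using anc_total[of b w1 w2] P1 P2 N unfolding lcaP_def by blast
      then have "\<phi> w3 \<le> \<phi> w1 \<or> \<phi> w3 \<le> \<phi> w2"
      proof
        assume h: "tree_anc r p w1 w2"
        have "tree_anc r p w1 c" using anc_trans[of c w2 w1] h P2 N unfolding lcaP_def by blast
        then have "tree_anc r p w1 w3" using P1 P3 unfolding lcaP_def by blast
        then show ?thesis using phi_mono[OF dec1 w3N] by blast
      next
        assume h: "tree_anc r p w2 w1"
        have "tree_anc r p w2 a" using anc_trans[of a w1 w2] h P1 N unfolding lcaP_def by blast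
        then have "tree_anc r p w2 w3" using P2 P3 unfolding lcaP_def by blast
        then show ?thesis using phi_mono[OF dec1 w3N] by blast
      qed
      then show "\<rho> x z \<le> max (\<rho> x y) (\<rho> y z)"
        using rho xyz unfolding a_b_c_def w1_w2_w3_def by auto
    qed
    show ?thesis using A B by blast
  qed
  then show "\<forall>x\<in>L. \<rho> x x = 0" "\<forall>x\<in>L. \<forall>y\<in>L. \<forall>z\<in>L. \<rho> x z \<le> max (\<rho> x y) (\<rho> y z)" by auto
qed



lemma ultra_hst:
  fixes L :: "'a set" and \<rho> :: "'a \<Rightarrow> 'a \<Rightarrow> real"
  assumes fin: "finite L" and ne: "L \<noteq> {}"
    and z: "\<forall>x\<in>L. \<rho> x x = 0" and pos: "\<forall>x\<in>L. \<forall>y\<in>L. x \<noteq> y \<longrightarrow> \<rho> x y > 0"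
    and sym: "\<forall>x\<in>L. \<forall>y\<in>L. \<rho> x y = \<rho> y x"
    and ult: "\<forall>x\<in>L. \<forall>y\<in>L. \<forall>z\<in>L. \<rho> x z \<le> max (\<rho> x y) (\<rho> y z)"
  shows "is_muHST 1 L \<rho>"
proof -
  define V where "V = (\<lambda>(x,y). \<rho> x y) ` (L \<times> L)"
  define R where "R = sorted_list_of_set V"
  define K where "K = length R - 1"
  define rr where "rr j = R ! j" for j
  have finV: "finite V" using fin unfolding V_def by simp
  have setR: "set R = V" using finV unfolding R_def by simp
  have sR: "sorted_wrt (<) R" unfolding R_def by simp
  obtain x0 where x0: "x0 \<in> L" using ne by blast
  have Vne: "V \<noteq> {}" using x0 unfolding V_def by blast
  have lenR: "length R = Suc K" using Vne setR unfolding K_def by (cases R) auto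
  have Vnn: "t \<ge> 0" if "t \<in> V" for t
    using that pos z unfolding V_def by (force simp: le_less)
  have rr_lt: "rr i < rr j" if "i < j" "j \<le> K" for i j
    using sorted_wrt_nth_less[OF sR, of i j] that lenR unfolding rr_def by simp
  have rr_le: "rr i \<le> rr j" if "i \<le> j" "j \<le> K" for i j
    using rr_lt[of i j] that by (cases "i = j") auto
  have rr_in: "rr j \<in> V" if "j \<le> K" for j
    using that lenR setR unfolding rr_def by (metis less_Suc_eq_le nth_mem)
  have rr_nn: "rr j \<ge> 0" if "j \<le> K" for j using rr_in Vnn that by blast
  have val_idx: "\<exists>j\<le>K. rr j = \<rho> x y" if "x \<in> L" "y \<in> L" for x y
  proof -
    have "\<rho> x y \<in> set R" using that setR unfolding V_def by force
    then obtain j where "j < length R" "R ! j = \<rho> x y" by (meson in_set_conv_nth)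
    then show ?thesis using lenR unfolding rr_def by (intro exI[of _ j]) auto
  qed
  have rr0: "rr 0 = 0"
  proof -
    obtain i where "i \<le> K" "rr i = \<rho> x0 x0" using val_idx x0 by blast
    then have "rr 0 \<le> 0" using rr_le[of 0 i] z x0 by simp
    then show ?thesis using rr_nn[of 0] by simp
  qed
  have rr_pos: "rr j > 0" if "0 < j" "j \<le> K" for j using rr_lt[of 0 j] that rr0 by simp
  have rr_top: "\<rho> x y \<le> rr K" if "x \<in> L" "y \<in> L" for x y
    using val_idx[OF that] rr_le by fastforce
  obtain g :: "'a \<Rightarrow> nat" where inj: "inj_on g L" using finite_imp_inj_to_nat_seg[OF fin] by blast
  define cls where "cls j x = {y\<in>L. \<rho> x y \<le> rr j}" for j x
  define cid where "cid j x = Min (g ` cls j x)" for j x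
  have ult2: "\<rho> x y \<le> t" if "x \<in> L" "y \<in> L" "w \<in> L" "\<rho> x w \<le> t" "\<rho> y w \<le> t" for x y w t
  proof -
    have "\<rho> x y \<le> max (\<rho> x w) (\<rho> w y)" using ult that by blast
    then show ?thesis using sym that by auto
  qed
  have cls_eq: "cls j x = cls j y" if "x \<in> L" "y \<in> L" "\<rho> x y \<le> rr j" for j x y
  proof -
    have "\<rho> x w \<le> rr j" if "w \<in> L" "\<rho> y w \<le> rr j" for w
      using ult2[of x w y "rr j"] that \<open>x \<in> L\<close> \<open>y \<in> L\<close> \<open>\<rho> x y \<le> rr j\<close> sym by auto
    moreover have "\<rho> y w \<le> rr j" if "w \<in> L" "\<rho> x w \<le> rr j" for w
      using ult2[of y w x "rr j"] that \<open>x \<in> L\<close> \<open>y \<in> L\<close> \<open>\<rho> x y \<le> rr j\<close> sym by auto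
    ultimately show ?thesis unfolding cls_def by blast
  qed
  have cid_mem: "\<exists>w\<in>cls j x. cid j x = g w" if "x \<in> L" "j \<le> K" for j x
  proof -
    have "x \<in> cls j x" using that z rr_nn unfolding cls_def by simp
    moreover have "finite (cls j x)" using fin unfolding cls_def by simp
    ultimately have "cid j x \<in> g ` cls j x" unfolding cid_def by (intro Min_in) auto
    then show ?thesis by blast
  qed
  have cid_iff: "cid j x = cid j y \<longleftrightarrow> \<rho> x y \<le> rr j" if xyj: "x \<in> L" "y \<in> L" "j \<le> K" for j x y
  proof
    assume "\<rho> x y \<le> rr j" then show "cid j x = cid j y" unfolding cid_def using cls_eq that by metis
  next
    assume e: "cid j x = cid j y"
    obtain w where w: "w \<in> cls j x" "cid j x = g w" using cid_mem xyj by blast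
    obtain w' where w': "w' \<in> cls j y" "cid j y = g w'" using cid_mem xyj by blast
    have "w = w'" using inj w w' e unfolding cls_def inj_on_def by auto
    then show "\<rho> x y \<le> rr j" using ult2[of x y w "rr j"] w w' xyj unfolding cls_def by auto
  qed
  define node where "node j x = prod_encode (j, cid j x)" for j x
  have node_eq: "node j x = node j' y \<longleftrightarrow> j = j' \<and> \<rho> x y \<le> rr j"
    if "x \<in> L" "y \<in> L" "j \<le> K" "j' \<le> K" for j j' x y
    using cid_iff[of x y j] that unfolding node_def by (auto simp: prod_encode_eq)
  define N where "N = (\<lambda>(j,x). node j x) ` ({..K} \<times> L)"
  define root where "root = node K x0"
  define p where "p n = (case prod_decode n of (j, c) \<Rightarrow> prod_encode (Suc j, cid (Suc j) (inv_into L g c)))" for n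
  have p_node: "p (node j x) = node (Suc j) x" if xj: "x \<in> L" "j < K" for j x
  proof -
    obtain w where w: "w \<in> cls j x" "cid j x = g w" using cid_mem[of x j] xj by auto
    have wL: "w \<in> L" using w unfolding cls_def by simp
    have "inv_into L g (cid j x) = w" using w wL inj by (simp add: inv_into_f_f)
    moreover have "\<rho> x w \<le> rr (Suc j)" using w rr_le[of j "Suc j"] xj unfolding cls_def by auto
    then have "cid (Suc j) w = cid (Suc j) x" using cid_iff[of w x "Suc j"] wL xj sym by auto
    ultimately show ?thesis unfolding p_def node_def by simp
  qed
  have pow_node: "(p ^^ i) (node j x) = node (j + i) x" if "x \<in> L" "j + i \<le> K" for i j x
    using that(2)
  proof (induction i)
    case 0 then show ?case by simp
  next
    case (Suc i) then show ?case using p_node[of x "j + i"] that by simp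
  qed
  have root_iff: "node j x = root \<longleftrightarrow> j = K" if "x \<in> L" "j \<le> K" for j x
    unfolding root_def using node_eq[of x x0 j K] that x0 rr_top by auto
  have anc_node: "tree_anc root p u (node j x) \<longleftrightarrow> (\<exists>i. j \<le> i \<and> i \<le> K \<and> u = node i x)"
    if "x \<in> L" "j \<le> K" for u j x
  proof
    assume "tree_anc root p u (node j x)"
    then obtain k where k: "(p ^^ k) (node j x) = u" "\<forall>i<k. (p ^^ i) (node j x) \<noteq> root"
      unfolding tree_anc_def by blast
    have "k \<le> K - j"
    proof (rule ccontr)
      assume "\<not> k \<le> K - j"
      then have "(p ^^ (K - j)) (node j x) \<noteq> root" using k by auto
      then show False using pow_node[of x j "K - j"] root_iff[of x K] that by simp
    qed
    then show "\<exists>i. j \<le> i \<and> i \<le> K \<and> u = node i x" using k pow_node[of x j k] that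
      by (intro exI[of _ "j + k"]) auto
  next
    assume "\<exists>i. j \<le> i \<and> i \<le> K \<and> u = node i x"
    then obtain i where i: "j \<le> i" "i \<le> K" "u = node i x" by blast
    have "(p ^^ (i - j)) (node j x) = u" using pow_node[of x j "i - j"] i that by simp
    moreover have "\<forall>i'<i - j. (p ^^ i') (node j x) \<noteq> root"
      using pow_node[of x j] root_iff[of x] i that by auto
    ultimately show "tree_anc root p u (node j x)" unfolding tree_anc_def by blast
  qed
  have T: "is_rooted_tree N root p"
    unfolding is_rooted_tree_def
  proof (intro conjI ballI impI)
    show "finite N" unfolding N_def using fin by simp
    show "root \<in> N" unfolding N_def root_def using x0 by (intro image_eqI[of _ _ "(K,x0)"]) auto
  next
    fix v assume "v \<in> N" "v \<noteq> root"
    then obtain j x where "j \<le> K" "x \<in> L" "v = node j x" unfolding N_def by auto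
    moreover have "j < K" using calculation root_iff[of x j] \<open>v \<noteq> root\<close> by auto
    ultimately have "p v = node (Suc j) x" "Suc j \<le> K" using p_node by auto
    then show "p v \<in> N" unfolding N_def using \<open>x \<in> L\<close> by (intro image_eqI[of _ _ "(Suc j,x)"]) auto
  next
    fix v assume "v \<in> N"
    then obtain j x where "j \<le> K" "x \<in> L" "v = node j x" unfolding N_def by auto
    then show "\<exists>k. (p ^^ k) v = root" using pow_node[of x j "K - j"] root_iff[of x K] by auto
  qed
  interpret rtree N root p by (simp add: rtree_def T)
  have leaf_node: "tree_leaf N root p (node j x) \<longleftrightarrow> j = 0" if xj: "x \<in> L" "j \<le> K" for j x
  proof
    assume l: "tree_leaf N root p (node j x)"
    show "j = 0"
    proof (rule ccontr)
      assume "j \<noteq> 0"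
      then have "node (j - 1) x \<in> N" "node (j - 1) x \<noteq> root" "p (node (j - 1) x) = node j x"
        using that root_iff[of x "j - 1"] p_node[of x "j - 1"] unfolding N_def by force+
      then show False using l unfolding tree_leaf_def by blast
    qed
  next
    assume j: "j = 0"
    have "node j x \<in> N" using that unfolding N_def by force
    moreover have "p w \<noteq> node j x" if "w \<in> N" "w \<noteq> root" for w
    proof -
      obtain j' y where "j' \<le> K" "y \<in> L" "w = node j' y" using \<open>w \<in> N\<close> unfolding N_def by auto
      moreover have "j' < K" using calculation root_iff[of y j'] \<open>w \<noteq> root\<close> by auto
      ultimately show ?thesis using p_node[of y j'] node_eq[of y x "Suc j'" j] xj j
        by auto
    qed
    ultimately show "tree_leaf N root p (node j x)" unfolding tree_leaf_def by blast
  qed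
  define lf where "lf x = node 0 x" for x
  have bij: "bij_betw lf L {v. tree_leaf N root p v}"
    unfolding bij_betw_def
  proof
    show "inj_on lf L" unfolding inj_on_def lf_def
    proof (intro ballI impI)
      fix x y assume "x \<in> L" "y \<in> L" "node 0 x = node 0 y"
      then have "\<rho> x y \<le> 0" using node_eq[of x y 0 0] rr0 by simp
      then show "x = y" using pos \<open>x \<in> L\<close> \<open>y \<in> L\<close> by force
    qed
    show "lf ` L = {v. tree_leaf N root p v}"
    proof
      show "lf ` L \<subseteq> {v. tree_leaf N root p v}" using leaf_node unfolding lf_def by auto
      show "{v. tree_leaf N root p v} \<subseteq> lf ` L"
      proof
        fix v assume "v \<in> {v. tree_leaf N root p v}"
        then have l: "tree_leaf N root p v" by simp
        then have "v \<in> N" unfolding tree_leaf_def by simp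
        then obtain j x where "j \<le> K" "x \<in> L" "v = node j x" unfolding N_def by auto
        then show "v \<in> lf ` L" using leaf_node l unfolding lf_def by auto
      qed
    qed
  qed
  define \<phi> where "\<phi> n = rr (fst (prod_decode n))" for n
  have phi_node: "\<phi> (node j x) = rr j" for j x unfolding \<phi>_def node_def by simp
  have P1: "\<forall>v\<in>N. \<phi> v \<ge> 0" unfolding N_def using phi_node rr_nn by auto
  have P2: "\<forall>v\<in>N. \<phi> v = 0 \<longleftrightarrow> tree_leaf N root p v"
  proof
    fix v assume "v \<in> N"
    then obtain j x where "j \<le> K" "x \<in> L" "v = node j x" unfolding N_def by auto
    then show "\<phi> v = 0 \<longleftrightarrow> tree_leaf N root p v" using leaf_node phi_node rr0 rr_pos
      by (metis less_numeral_extra(3) not_gr_zero)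
  qed
  have P3: "\<forall>v\<in>N. v \<noteq> root \<longrightarrow> \<phi> v \<le> \<phi> (p v) / 1"
  proof (intro ballI impI)
    fix v assume "v \<in> N" "v \<noteq> root"
    then obtain j x where "j \<le> K" "x \<in> L" "v = node j x" unfolding N_def by auto
    then have "j < K" using root_iff \<open>v \<noteq> root\<close> by force
    then show "\<phi> v \<le> \<phi> (p v) / 1" using p_node phi_node rr_le[of j "Suc j"] \<open>x \<in> L\<close> \<open>v = node j x\<close> by simp
  qed
  have P4: "\<forall>x\<in>L. \<forall>y\<in>L. \<rho> x y = \<phi> (tree_lca root p (lf x) (lf y))"
  proof (intro ballI)
    fix x y assume x: "x \<in> L" and y: "y \<in> L"
    obtain j where j: "j \<le> K" "rr j = \<rho> x y" using val_idx x y by blast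
    have n0x: "node 0 x \<in> N" and n0y: "node 0 y \<in> N" using x y unfolding N_def by force+
    have "lcaP (node 0 x) (node 0 y) (node j x)"
      unfolding lcaP_def
    proof (intro conjI allI impI)
      show "tree_anc root p (node j x) (node 0 x)" using anc_node[of x 0] x j by auto
      have "node j x = node j y" using node_eq[of x y j j] x y j by simp
      then show "tree_anc root p (node j x) (node 0 y)" using anc_node[of y 0] y j by auto
      fix w' assume w': "tree_anc root p w' (node 0 x) \<and> tree_anc root p w' (node 0 y)"
      then obtain i i' where i: "i \<le> K" "w' = node i x" "i' \<le> K" "w' = node i' y"
        using anc_node[of x 0] anc_node[of y 0] x y by auto
      then have "i = i'" "\<rho> x y \<le> rr i" using node_eq[of x y i i'] x y by auto
      have "j \<le> i"
      proof (rule ccontr)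
        assume "\<not> j \<le> i"
        then have "rr i < rr j" using rr_lt[of i j] j by auto
        then show False using \<open>\<rho> x y \<le> rr i\<close> j by linarith
      qed
      then show "tree_anc root p w' (node j x)" using anc_node[of x j] x j i by auto
    qed
    then have "tree_lca root p (node 0 x) (node 0 y) = node j x" using lca_eq n0x n0y by blast
    then show "\<rho> x y = \<phi> (tree_lca root p (lf x) (lf y))" unfolding lf_def using phi_node j by simp
  qed
  show ?thesis unfolding is_muHST_def using T bij P1 P2 P3 P4 by blast
qed



definition edgeR :: "'a set \<Rightarrow> ('a \<Rightarrow> 'a \<Rightarrow> real) \<Rightarrow> real \<Rightarrow> 'a \<Rightarrow> 'a \<Rightarrow> bool" where
  "edgeR S f t a b \<longleftrightarrow> a \<in> S \<and> b \<in> S \<and> f a b \<le> t"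

definition bvals :: "'a set \<Rightarrow> ('a \<Rightarrow> 'a \<Rightarrow> real) \<Rightarrow> 'a \<Rightarrow> 'a \<Rightarrow> real set" where
  "bvals S f u v = {t \<in> (\<lambda>(a,b). f a b) ` (S \<times> S). (edgeR S f t)\<^sup>*\<^sup>* u v}"

definition bott :: "'a set \<Rightarrow> ('a \<Rightarrow> 'a \<Rightarrow> real) \<Rightarrow> 'a \<Rightarrow> 'a \<Rightarrow> real" where
  "bott S f u v = (if u = v then 0 else Min (bvals S f u v))"

lemma bvals_fin: "finite S \<Longrightarrow> finite (bvals S f u v)"
  unfolding bvals_def by simp

lemma bvals_direct: "u \<in> S \<Longrightarrow> v \<in> S \<Longrightarrow> f u v \<in> bvals S f u v"
  unfolding bvals_def by (auto simp: edgeR_def intro!: r_into_rtranclp)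

lemma bott_in: "finite S \<Longrightarrow> u \<in> S \<Longrightarrow> v \<in> S \<Longrightarrow> u \<noteq> v \<Longrightarrow> bott S f u v \<in> bvals S f u v"
  unfolding bott_def using bvals_fin bvals_direct by (metis Min_in empty_iff)

lemma bott_le: "finite S \<Longrightarrow> u \<in> S \<Longrightarrow> v \<in> S \<Longrightarrow> u \<noteq> v \<Longrightarrow> bott S f u v \<le> f u v"
  unfolding bott_def by (simp add: Min_le bvals_fin bvals_direct)

lemma bott_path:
  assumes "finite S" "u \<in> S" "v \<in> S" "u \<noteq> v"
  obtains xs where "rtrancl_path (edgeR S f (bott S f u v)) u xs v" "distinct (u # xs)"
proof -
  have "(edgeR S f (bott S f u v))\<^sup>*\<^sup>* u v" using bott_in[OF assms] unfolding bvals_def by simp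
  then obtain ys where "rtrancl_path (edgeR S f (bott S f u v)) u ys v"
    using rtranclp_eq_rtrancl_path by metis
  then show ?thesis using rtrancl_path_distinct that by metis
qed

lemma path_set: "rtrancl_path (edgeR S f t) a xs b \<Longrightarrow> a \<in> S \<Longrightarrow> set xs \<subseteq> S"
  by (induction rule: rtrancl_path.induct) (auto simp: edgeR_def)

lemma bott_pos:
  assumes "finite S" "u \<in> S" "v \<in> S" "u \<noteq> v" "\<forall>a\<in>S. \<forall>b\<in>S. a \<noteq> b \<longrightarrow> f a b > 0"
  shows "bott S f u v > 0"
proof -
  obtain xs where p: "rtrancl_path (edgeR S f (bott S f u v)) u xs v" "distinct (u # xs)"
    using bott_path[OF assms(1-4), of f] by metis
  show ?thesis using p(1)
  proof (cases rule: rtrancl_path.cases)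
    case base then show ?thesis using assms(4) by simp
  next
    case (step y ys)
    then have yu: "y \<noteq> u" using p(2) by auto
    have e: "u \<in> S" "y \<in> S" "f u y \<le> bott S f u v" using step(2) unfolding edgeR_def by auto
    have "f u y > 0" using assms(5) e(1,2) yu by auto
    then show ?thesis using e(3) by linarith
  qed
qed

lemma bott_nn: "finite S \<Longrightarrow> u \<in> S \<Longrightarrow> v \<in> S \<Longrightarrow> \<forall>a\<in>S. \<forall>b\<in>S. a \<noteq> b \<longrightarrow> f a b > 0 \<Longrightarrow> bott S f u v \<ge> 0"
  using bott_pos[of S u v f] by (cases "u = v") (auto simp: bott_def)

lemma edgeR_sym: "\<forall>a\<in>S. \<forall>b\<in>S. f a b = f b a \<Longrightarrow> edgeR S f t a b = edgeR S f t b a"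
  unfolding edgeR_def by auto

lemma rtc_sym: assumes "\<forall>a\<in>S. \<forall>b\<in>S. f a b = f b a" "(edgeR S f t)\<^sup>*\<^sup>* u v"
  shows "(edgeR S f t)\<^sup>*\<^sup>* v u"
  using assms(2)
proof (induction rule: rtranclp_induct)
  case base then show ?case by simp
next
  case (step y z)
  then have "edgeR S f t z y" using edgeR_sym[OF assms(1)] by metis
  then show ?case using step by (meson converse_rtranclp_into_rtranclp)
qed

lemma bott_sym: assumes "\<forall>a\<in>S. \<forall>b\<in>S. f a b = f b a" shows "bott S f u v = bott S f v u"
proof -
  have "bvals S f u v = bvals S f v u" unfolding bvals_def using rtc_sym[OF assms] by blast
  then show ?thesis unfolding bott_def by simp
qed

lemma edgeR_mono: "edgeR S f t a b \<Longrightarrow> t \<le> t' \<Longrightarrow> edgeR S f t' a b"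
  unfolding edgeR_def by auto

lemma rtc_mono: "(edgeR S f t)\<^sup>*\<^sup>* u v \<Longrightarrow> t \<le> t' \<Longrightarrow> (edgeR S f t')\<^sup>*\<^sup>* u v"
  by (metis (no_types, lifting) edgeR_mono mono_rtranclp)

lemma bott_ultra:
  assumes fin: "finite S" and S: "u \<in> S" "v \<in> S" "w \<in> S"
    and sym: "\<forall>a\<in>S. \<forall>b\<in>S. f a b = f b a" and pos: "\<forall>a\<in>S. \<forall>b\<in>S. a \<noteq> b \<longrightarrow> f a b > 0"
  shows "bott S f u w \<le> max (bott S f u v) (bott S f v w)"
proof (cases "u = w \<or> u = v \<or> v = w")
  case True
  have nn: "bott S f u v \<ge> 0" "bott S f v w \<ge> 0" using bott_nn[OF fin _ _ pos] S by auto
  have "u = w \<Longrightarrow> bott S f u w = 0" by (simp add: bott_def)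
  then show ?thesis using True nn by auto
next
  case False
  define t where "t = max (bott S f u v) (bott S f v w)"
  have 1: "bott S f u v \<in> bvals S f u v" "bott S f v w \<in> bvals S f v w" using bott_in fin S False by auto
  have a1: "(edgeR S f (bott S f u v))\<^sup>*\<^sup>* u v" and a2: "(edgeR S f (bott S f v w))\<^sup>*\<^sup>* v w"
    using 1 unfolding bvals_def by simp_all
  have "(edgeR S f t)\<^sup>*\<^sup>* u v" using rtc_mono[OF a1, of t] unfolding t_def by simp
  moreover have "(edgeR S f t)\<^sup>*\<^sup>* v w" using rtc_mono[OF a2, of t] unfolding t_def by simp
  ultimately have "(edgeR S f t)\<^sup>*\<^sup>* u w" by (rule rtranclp_trans)
  moreover have "t = bott S f u v \<or> t = bott S f v w" unfolding t_def max_def by auto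
  then have "t \<in> (\<lambda>(a,b). f a b) ` (S \<times> S)" using 1 unfolding bvals_def by auto
  ultimately have "t \<in> bvals S f u w" unfolding bvals_def by simp
  then show ?thesis unfolding t_def bott_def using False bvals_fin[OF fin] by (simp add: Min_le)
qed

lemma bott_mono:
  assumes fin: "finite S'" and sub: "S \<subseteq> S'" and eq: "\<forall>a\<in>S. \<forall>b\<in>S. f' a b = f a b"
    and S: "u \<in> S" "v \<in> S"
  shows "bott S' f' u v \<le> bott S f u v"
proof (cases "u = v")
  case True then show ?thesis by (simp add: bott_def)
next
  case False
  have finS: "finite S" using fin sub finite_subset by blast
  define t where "t = bott S f u v"
  have 1: "t \<in> bvals S f u v" using bott_in[OF finS S False] unfolding t_def .
  have ed: "edgeR S' f' t a b" if "edgeR S f t a b" for a b using that sub eq unfolding edgeR_def by auto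
  have r: "(edgeR S f t)\<^sup>*\<^sup>* u v" using 1 unfolding bvals_def by simp
  have "(edgeR S' f' t)\<^sup>*\<^sup>* u v" using r
  proof (induction rule: rtranclp_induct)
    case base then show ?case by simp
  next
    case (step y z) then show ?case using ed[of y z] by (meson rtranclp.rtrancl_into_rtrancl)
  qed
  moreover have "t \<in> (\<lambda>(a,b). f' a b) ` (S' \<times> S')"
  proof -
    obtain a b where ab: "a \<in> S" "b \<in> S" "t = f a b" using 1 unfolding bvals_def by auto
    then show ?thesis using sub eq by (intro image_eqI[of _ _ "(a,b)"]) auto
  qed
  ultimately have "t \<in> bvals S' f' u v" unfolding bvals_def by simp
  then show ?thesis unfolding t_def bott_def using False bvals_fin[OF fin] by (simp add: Min_le)
qed

lemma path_len:
  assumes "rtrancl_path (edgeR S f t) a xs b" "\<forall>x y. edgeR S f t x y \<longrightarrow> d x y \<le> c"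
    "\<forall>x y z. d x z \<le> d x y + d y z" "\<forall>x. d x x = 0"
  shows "d a b \<le> real (length xs) * c"
  using assms(1)
proof (induction rule: rtrancl_path.induct)
  case (base x) then show ?case using assms by simp
next
  case (step x y ys z)
  have "d x z \<le> d x y + d y z" using assms(3) by blast
  also have "\<dots> \<le> c + real (length ys) * c" using step assms(2) by (meson add_mono)
  finally show ?case by (simp add: algebra_simps)
qed

lemma path_sum:
  assumes "rtrancl_path (edgeR S f t) a xs b" "distinct (a # xs)"
    "\<forall>x y. edgeR S f t x y \<longrightarrow> d x y \<le> t * (h x + h y)"
    "\<forall>x y z. d x z \<le> d x y + d y z" "\<forall>x. d x x = 0" "\<forall>x. h x \<ge> 0" "t \<ge> 0"
  shows "d a b \<le> t * (h a + 2 * sum h (set xs))"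
  using assms(1,2)
proof (induction rule: rtrancl_path.induct)
  case (base x) then show ?case using assms by simp
next
  case (step x y ys z)
  have "d x z \<le> d x y + d y z" using assms(4) by blast
  also have "\<dots> \<le> t * (h x + h y) + t * (h y + 2 * sum h (set ys))" using step assms(3) by (meson add_mono distinct.simps(2))
  also have "\<dots> = t * (h x + 2 * sum h (set (y # ys)))"
    using step(4) by (simp add: algebra_simps)
  finally show ?case .
qed



lemma ln2_ge: "ln (2::real) \<ge> 1/2"
proof -
  have "ln (1/2::real) \<le> 1/2 - 1" by (rule ln_le_minus_one) simp
  then show ?thesis by (simp add: ln_div)
qed

lemma ln2_le: "ln (2::real) \<le> 1"
  using ln_le_minus_one[of "2::real"] by simp

lemma big_ln: assumes "(x::real) \<ge> 256" shows "ln x \<ge> 4" "ln (ln x) \<ge> 1"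
proof -
  have "ln (256::real) = 8 * ln 2" using ln_realpow[of "2::real" 8] by simp
  then have "ln (256::real) \<ge> 4" using ln2_ge by simp
  moreover have "ln (256::real) \<le> ln x" using assms by simp
  ultimately show l4: "ln x \<ge> 4" by simp
  have "ln (4::real) = 2 * ln 2" using ln_realpow[of "2::real" 2] by simp
  then have "ln (4::real) \<ge> 1" using ln2_ge by simp
  moreover have "ln (4::real) \<le> ln (ln x)" using l4 by simp
  ultimately show "ln (ln x) \<ge> 1" by simp
qed

lemma ln_diff_lower: assumes "(a::real) > 0" "b > 0" shows "ln a - ln b \<ge> (a - b) / a"
proof -
  have "ln (b / a) \<le> b / a - 1" using assms by (intro ln_le_minus_one) simp
  then have "ln b - ln a \<le> b / a - 1" using assms by (simp add: ln_div)
  moreover have "b / a - 1 = - ((a - b) / a)" using assms by (simp add: field_simps)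
  ultimately show ?thesis by linarith
qed

lemma ln_diff_upper: assumes "(a::real) > 0" "b > 0" shows "ln a - ln b \<le> (a - b) / b"
proof -
  have "ln (a / b) \<le> a / b - 1" using assms by (intro ln_le_minus_one) simp
  then have "ln a - ln b \<le> a / b - 1" using assms by (simp add: ln_div)
  moreover have "a / b - 1 = (a - b) / b" using assms by (simp add: field_simps)
  ultimately show ?thesis by linarith
qed

definition gg :: "nat \<Rightarrow> real" where
  "gg m = (real m + 257) * ln (real m + 257) * (ln (ln (real m + 257)))^2"

lemma gg_pos: "gg m > 0"
proof -
  have "real m + 257 \<ge> 256" by simp
  then have "ln (real m + 257) \<ge> 4" "ln (ln (real m + 257)) \<ge> 1" using big_ln by blast+
  then show ?thesis unfolding gg_def by simp
qed

lemma gg_step: "1 / gg m \<le> 1 / ln (ln (real m + 256)) - 1 / ln (ln (real (Suc m) + 256))"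
proof -
  define x where "x = real m + 256"
  define y where "y = x + 1"
  have x: "x \<ge> 256" unfolding x_def by simp
  have y: "y \<ge> 256" unfolding y_def using x by simp
  have lx: "ln x \<ge> 4" "ln (ln x) \<ge> 1" using big_ln[OF x] by auto
  have ly: "ln y \<ge> 4" "ln (ln y) \<ge> 1" using big_ln[OF y] by auto
  have d1: "ln y - ln x \<ge> 1 / y" using ln_diff_lower[of y x] x y unfolding y_def by simp
  have d2: "ln (ln y) - ln (ln x) \<ge> (ln y - ln x) / ln y" using ln_diff_lower[of "ln y" "ln x"] lx ly by simp
  have "(1 / y) / ln y \<le> (ln y - ln x) / ln y" using d1 ly by (intro divide_right_mono) auto
  then have d3: "ln (ln y) - ln (ln x) \<ge> 1 / (y * ln y)" using d2 by simp
  have "ln x \<le> ln y" using x unfolding y_def by simp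
  then have llxy: "ln (ln x) \<le> ln (ln y)" using lx ly by simp
  have "1 / ln (ln x) - 1 / ln (ln y) = (ln (ln y) - ln (ln x)) / (ln (ln x) * ln (ln y))"
    using lx ly by (simp add: field_simps)
  also have "\<dots> \<ge> (1 / (y * ln y)) / (ln (ln x) * ln (ln y))"
    using d3 lx ly by (intro divide_right_mono) auto
  finally have A: "1 / ln (ln x) - 1 / ln (ln y) \<ge> 1 / (y * ln y * ln (ln x) * ln (ln y))"
    by (simp add: mult.assoc)
  have "y * ln y * ln (ln x) * ln (ln y) \<le> y * ln y * ln (ln y) * ln (ln y)"
    using llxy y ly lx by (intro mult_right_mono mult_left_mono) auto
  moreover have "y * ln y * ln (ln x) * ln (ln y) > 0" using y lx ly by simp
  ultimately have "1 / (y * ln y * ln (ln y) * ln (ln y)) \<le> 1 / (y * ln y * ln (ln x) * ln (ln y))"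
    by (intro divide_left_mono) auto
  moreover have "gg m = y * ln y * ln (ln y) * ln (ln y)"
    unfolding gg_def y_def x_def by (simp add: power2_eq_square add.commute add.left_commute mult.assoc)
  ultimately have "1 / gg m \<le> 1 / ln (ln x) - 1 / ln (ln y)" using A by simp
  moreover have "real (Suc m) + 256 = y" unfolding y_def x_def by simp
  ultimately show ?thesis unfolding x_def by simp
qed

lemma gg_sum: "(\<Sum>m<M. 1 / gg m) \<le> 1"
proof -
  define F where "F m = 1 / ln (ln (real m + 256))" for m
  have "(\<Sum>m<M. 1 / gg m) \<le> (\<Sum>m<M. F m - F (Suc m))"
    using gg_step unfolding F_def by (intro sum_mono) auto
  also have "\<dots> = F 0 - F M" by (rule sum_lessThan_telescope')
  also have "\<dots> \<le> 1"
  proof -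
    have "F M \<ge> 0" unfolding F_def using big_ln[of "real M + 256"] by simp
    moreover have "F 0 \<le> 1" unfolding F_def using big_ln[of 256] by simp
    ultimately show ?thesis by simp
  qed
  finally show ?thesis .
qed

lemma gg_bound: assumes "m < n" "n \<ge> 256"
  shows "2 * gg m \<le> 32 * real n * ln (real n) * (ln (ln (real n)))^2"
proof -
  define X where "X = real m + 257"
  define Y where "Y = 2 * real n"
  have XY: "X \<le> Y" "X \<ge> 256" using assms unfolding X_def Y_def by auto
  have n: "real n \<ge> 256" using assms by simp
  have lX: "ln X \<ge> 4" "ln (ln X) \<ge> 1" using big_ln[OF XY(2)] by auto
  have lXY: "ln X \<le> ln Y" using XY by simp
  have llXY: "ln (ln X) \<le> ln (ln Y)" using lXY lX by simp
  have "gg m = X * ln X * (ln (ln X))^2" unfolding gg_def X_def by simp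
  also have "\<dots> \<le> Y * ln Y * (ln (ln Y))^2"
    using XY lX lXY llXY by (intro mult_mono power_mono) auto
  also have "\<dots> \<le> (2 * real n) * (2 * ln (real n)) * (2 * ln (ln (real n)))^2"
  proof -
    have ln_n: "ln (real n) \<ge> 4" "ln (ln (real n)) \<ge> 1" using big_ln[OF n] by auto
    have lY: "ln Y = ln 2 + ln (real n)" unfolding Y_def using n by (simp add: ln_mult)
    have lY2: "ln Y \<le> 2 * ln (real n)" using lY ln2_le ln_n by simp
    have "ln (ln Y) \<le> ln (2 * ln (real n))" using lY2 lY ln_n ln2_ge by (subst ln_le_cancel_iff) auto
    also have "\<dots> = ln 2 + ln (ln (real n))" using ln_n by (simp add: ln_mult)
    also have "\<dots> \<le> 2 * ln (ln (real n))" using ln2_le ln_n by simp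
    finally have llY: "ln (ln Y) \<le> 2 * ln (ln (real n))" .
    have llY0: "ln (ln Y) \<ge> 0" using llXY lX by simp
    have lY1: "ln Y \<ge> 1" using lXY lX by linarith
    show ?thesis unfolding Y_def[symmetric] using lY2 llY llY0 n ln_n XY lX lY1
      by (intro mult_mono power_mono) auto
  qed
  also have "\<dots> = 16 * real n * ln (real n) * (ln (ln (real n)))^2" by (simp add: power2_eq_square)
  finally show ?thesis by simp
qed

lemma nlogn_step: assumes "(m::real) \<ge> 2"
  shows "ln (ln (m + 1)) - ln (ln m) \<le> 1 / (m * ln m)"
proof -
  have lm: "ln m > 0" using assms by simp
  have lm1: "ln (m + 1) > 0" using assms by simp
  have "ln (ln (m + 1)) - ln (ln m) \<le> (ln (m + 1) - ln m) / ln m"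
    using ln_diff_upper[OF lm1 lm] .
  also have "\<dots> \<le> (1 / m) / ln m"
  proof -
    have "ln (m + 1) - ln m \<le> ((m + 1) - m) / m" using ln_diff_upper[of "m+1" m] assms by simp
    then show ?thesis using lm by (intro divide_right_mono) auto
  qed
  finally show ?thesis by simp
qed

lemma nlogn_div: assumes "T \<ge> (2::nat)"
  shows "\<exists>K. (\<Sum>i<K. 1 / (real (T + i) * ln (real (T + i)))) > 1"
proof -
  define c where "c = ln (ln (real T)) + 2"
  define K where "K = nat \<lceil>exp (exp c)\<rceil>"
  have KK: "real (T + K) \<ge> exp (exp c)" unfolding K_def by linarith
  have "real (T + K) > 0" using KK exp_gt_zero[of "exp c"] by linarith
  then have "ln (real (T + K)) \<ge> exp c" using KK by (subst ln_ge_iff) auto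
  moreover have "ln (real (T + K)) > 0" using calculation exp_gt_zero[of c] by linarith
  ultimately have "ln (ln (real (T + K))) \<ge> c" by (subst ln_ge_iff) auto
  have "(\<Sum>i<K. ln (ln (real (T + Suc i))) - ln (ln (real (T + i)))) \<le> (\<Sum>i<K. 1 / (real (T + i) * ln (real (T + i))))"
  proof (intro sum_mono)
    fix i assume "i \<in> {..<K}"
    have "real (T + i) \<ge> 2" using assms by simp
    then have "ln (ln (real (T + i) + 1)) - ln (ln (real (T + i))) \<le> 1 / (real (T + i) * ln (real (T + i)))"
      by (rule nlogn_step)
    moreover have "real (T + Suc i) = real (T + i) + 1" by simp
    ultimately show "ln (ln (real (T + Suc i))) - ln (ln (real (T + i))) \<le> 1 / (real (T + i) * ln (real (T + i)))"
      by (simp only:)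
  qed
  moreover have "(\<Sum>i<K. ln (ln (real (T + Suc i))) - ln (ln (real (T + i)))) = ln (ln (real (T + K))) - ln (ln (real (T + 0)))"
    by (rule sum_lessThan_telescope[where f = "\<lambda>i. ln (ln (real (T + i)))"])
  ultimately show ?thesis using \<open>ln (ln (real (T + K))) \<ge> c\<close> unfolding c_def by (intro exI[of _ K]) simp
qed



definition arrived :: "('a \<times> bool) list \<Rightarrow> 'a set" where
  "arrived \<sigma> = {v. (v, True) \<in> set \<sigma>}"

lemma arrived_eq: "arrived \<sigma> = fst ` set (filter snd \<sigma>)"
  unfolding arrived_def by force

lemma arrived_fin: "finite (arrived \<sigma>)"
  unfolding arrived_eq by simp

lemma card_arrived: "card (arrived \<sigma>) \<le> length (filter snd \<sigma>)"
  unfolding arrived_eq using card_image_le card_length order_trans by blast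

lemma alive_sub_gen:
  "fold (\<lambda>(v, arr) L. if arr then insert v L else L - {v}) \<sigma> A \<subseteq> A \<union> arrived \<sigma>"
proof (induction \<sigma> arbitrary: A)
  case Nil then show ?case by simp
next
  case (Cons x \<sigma>)
  obtain v b where x: "x = (v, b)" by (cases x)
  define A' where "A' = (if b then insert v A else A - {v})"
  have "fold (\<lambda>(v, arr) L. if arr then insert v L else L - {v}) (x # \<sigma>) A
        = fold (\<lambda>(v, arr) L. if arr then insert v L else L - {v}) \<sigma> A'"
    unfolding A'_def x by simp
  also have "\<dots> \<subseteq> A' \<union> arrived \<sigma>" by (rule Cons.IH)
  also have "\<dots> \<subseteq> A \<union> arrived (x # \<sigma>)" unfolding A'_def x arrived_def by auto
  finally show ?case .
qed

lemma alive_sub: "alive \<sigma> \<subseteq> arrived \<sigma>"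
  unfolding alive_def using alive_sub_gen[of \<sigma> "{}"] by simp

lemma arrived_butlast: "arrived (butlast \<sigma>) \<subseteq> arrived \<sigma>"
  unfolding arrived_def using in_set_butlastD by fastforce

lemma alive_snoc: "alive (\<sigma> @ [(v, True)]) = insert v (alive \<sigma>)"
  unfolding alive_def by simp

lemma metric_facts:
  assumes "is_metric d"
  shows "d x x = 0" "d x y \<ge> 0" "x \<noteq> y \<Longrightarrow> d x y > 0" "d x y = d y x" "d x z \<le> d x y + d y z"
proof -
  show z: "d x x = 0" using assms unfolding is_metric_def by blast
  show s: "d x y = d y x" using assms unfolding is_metric_def by blast
  show "d x z \<le> d x y + d y z" using assms unfolding is_metric_def by blast
  have "d x x \<le> d x y + d y x" using assms unfolding is_metric_def by blast
  then show nn: "d x y \<ge> 0" using z s by simp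
  show "x \<noteq> y \<Longrightarrow> d x y > 0" using nn assms unfolding is_metric_def by (simp add: less_le)
qed

lemma ome_bott:
  assumes sym: "\<And>\<sigma> a b. \<sigma> \<in> S \<Longrightarrow> \<sigma> \<noteq> [] \<Longrightarrow> a \<in> arrived \<sigma> \<Longrightarrow> b \<in> arrived \<sigma> \<Longrightarrow> F \<sigma> a b = F \<sigma> b a"
    and pos: "\<And>\<sigma> a b. \<sigma> \<in> S \<Longrightarrow> \<sigma> \<noteq> [] \<Longrightarrow> a \<in> arrived \<sigma> \<Longrightarrow> b \<in> arrived \<sigma> \<Longrightarrow> a \<noteq> b \<Longrightarrow> F \<sigma> a b > 0"
    and stab: "\<And>\<sigma> a b. \<sigma> \<in> S \<Longrightarrow> \<sigma> \<noteq> [] \<Longrightarrow> a \<in> arrived (butlast \<sigma>) \<Longrightarrow> b \<in> arrived (butlast \<sigma>) \<Longrightarrow> F \<sigma> a b = F (butlast \<sigma>) a b"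
    and nc: "\<And>\<sigma> u v. \<sigma> \<in> S \<Longrightarrow> \<sigma> \<noteq> [] \<Longrightarrow> u \<in> alive \<sigma> \<Longrightarrow> v \<in> alive \<sigma> \<Longrightarrow> d u v \<le> bott (arrived \<sigma>) (F \<sigma>) u v"
  shows "online_monotone_embedding d S (\<lambda>\<sigma>. bott (arrived \<sigma>) (F \<sigma>))"
  unfolding online_monotone_embedding_def
proof (intro ballI impI, intro conjI)
  fix \<sigma> assume \<sigma>: "\<sigma> \<in> S" "\<sigma> \<noteq> []"
  define A where "A = arrived \<sigma>"
  have finA: "finite A" unfolding A_def by (rule arrived_fin)
  have symA: "\<forall>a\<in>A. \<forall>b\<in>A. F \<sigma> a b = F \<sigma> b a" using sym \<sigma> unfolding A_def by blast
  have posA: "\<forall>a\<in>A. \<forall>b\<in>A. a \<noteq> b \<longrightarrow> F \<sigma> a b > 0" using pos \<sigma> unfolding A_def by blast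
  have sub: "alive \<sigma> \<subseteq> A" unfolding A_def by (rule alive_sub)
  show "in_HSTs (alive \<sigma>) (bott (arrived \<sigma>) (F \<sigma>))"
  proof (cases "alive \<sigma> = {}")
    case True
    then show ?thesis unfolding in_HSTs_def is_muHST_def by (intro exI[of _ 1]) simp
  next
    case False
    have "is_muHST 1 (alive \<sigma>) (bott A (F \<sigma>))"
    proof (rule ultra_hst)
      show "finite (alive \<sigma>)" using finA sub finite_subset by blast
      show "alive \<sigma> \<noteq> {}" by (fact False)
      show "\<forall>x\<in>alive \<sigma>. bott A (F \<sigma>) x x = 0" by (simp add: bott_def)
      show "\<forall>x\<in>alive \<sigma>. \<forall>y\<in>alive \<sigma>. x \<noteq> y \<longrightarrow> 0 < bott A (F \<sigma>) x y"
        using bott_pos[OF finA _ _ _ posA] sub by blast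
      show "\<forall>x\<in>alive \<sigma>. \<forall>y\<in>alive \<sigma>. bott A (F \<sigma>) x y = bott A (F \<sigma>) y x"
        using bott_sym[OF symA] by blast
      show "\<forall>x\<in>alive \<sigma>. \<forall>y\<in>alive \<sigma>. \<forall>z\<in>alive \<sigma>.
              bott A (F \<sigma>) x z \<le> max (bott A (F \<sigma>) x y) (bott A (F \<sigma>) y z)"
        using bott_ultra[OF finA _ _ _ symA posA] sub by blast
    qed
    then show ?thesis unfolding in_HSTs_def A_def by (intro exI[of _ 1]) simp
  qed
  show "\<forall>u\<in>alive \<sigma>. \<forall>v\<in>alive \<sigma>. d u v \<le> bott (arrived \<sigma>) (F \<sigma>) u v" using nc[OF \<sigma>] by auto
  show "\<forall>u\<in>alive \<sigma> \<inter> alive (butlast \<sigma>). \<forall>v\<in>alive \<sigma> \<inter> alive (butlast \<sigma>).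
          bott (arrived \<sigma>) (F \<sigma>) u v \<le> bott (arrived (butlast \<sigma>)) (F (butlast \<sigma>)) u v"
  proof (intro ballI)
    fix u v assume u: "u \<in> alive \<sigma> \<inter> alive (butlast \<sigma>)" and v: "v \<in> alive \<sigma> \<inter> alive (butlast \<sigma>)"
    have ua: "u \<in> arrived (butlast \<sigma>)" and va: "v \<in> arrived (butlast \<sigma>)"
      using u v alive_sub[of "butlast \<sigma>"] by auto
    have st: "\<forall>a\<in>arrived (butlast \<sigma>). \<forall>b\<in>arrived (butlast \<sigma>). F \<sigma> a b = F (butlast \<sigma>) a b"
      using stab[OF \<sigma>] by auto
    show "bott (arrived \<sigma>) (F \<sigma>) u v \<le> bott (arrived (butlast \<sigma>)) (F (butlast \<sigma>)) u v"
      by (rule bott_mono[OF arrived_fin[of \<sigma>] arrived_butlast[of \<sigma>] st ua va])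
  qed
qed

lemma upto_card: "\<sigma> \<in> upto n \<Longrightarrow> card (arrived \<sigma>) \<le> n"
  unfolding upto_def using card_arrived order_trans by blast

lemma two_card: "a \<in> arrived \<sigma> \<Longrightarrow> b \<in> arrived \<sigma> \<Longrightarrow> a \<noteq> b \<Longrightarrow> card (arrived \<sigma>) \<ge> 2"
proof -
  assume "a \<in> arrived \<sigma>" "b \<in> arrived \<sigma>" "a \<noteq> b"
  then have "card {a, b} \<le> card (arrived \<sigma>)" by (intro card_mono arrived_fin) auto
  then show ?thesis using \<open>a \<noteq> b\<close> by simp
qed

lemma part1:
  fixes d :: "'a \<Rightarrow> 'a \<Rightarrow> real"
  assumes M: "is_metric d"
  shows "\<exists>E. online_monotone_embedding d (upto n) E \<and> has_distortion d (upto n) E (real n - 1)"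
proof -
  define F where "F \<sigma> a b = (real n - 1) * d a b" for \<sigma> :: "('a \<times> bool) list" and a b
  have n2: "n \<ge> 2" if "\<sigma> \<in> upto n" "a \<in> arrived \<sigma>" "b \<in> arrived \<sigma>" "a \<noteq> b" for \<sigma> a b
    using two_card[OF that(2-4)] upto_card[OF that(1)] by simp
  have ome: "online_monotone_embedding d (upto n) (\<lambda>\<sigma>. bott (arrived \<sigma>) (F \<sigma>))"
  proof (rule ome_bott)
    show "F \<sigma> a b = F \<sigma> b a" for \<sigma> a b unfolding F_def using metric_facts[OF M] by simp
    show "F \<sigma> a b > 0" if "\<sigma> \<in> upto n" "\<sigma> \<noteq> []" "a \<in> arrived \<sigma>" "b \<in> arrived \<sigma>" "a \<noteq> b" for \<sigma> a b
      using n2[OF that(1,3,4,5)] metric_facts(3)[OF M that(5)] unfolding F_def by simp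
    show "F \<sigma> a b = F (butlast \<sigma>) a b" for \<sigma> a b unfolding F_def by simp
    show "d u v \<le> bott (arrived \<sigma>) (F \<sigma>) u v"
      if \<sigma>: "\<sigma> \<in> upto n" "\<sigma> \<noteq> []" and uv: "u \<in> alive \<sigma>" "v \<in> alive \<sigma>" for \<sigma> u v
    proof (cases "u = v")
      case True then show ?thesis using metric_facts[OF M] by (simp add: bott_def)
    next
      case False
      define A where "A = arrived \<sigma>"
      have uvA: "u \<in> A" "v \<in> A" using uv alive_sub[of \<sigma>] unfolding A_def by auto
      have n: "n \<ge> 2" using n2[OF \<sigma>(1)] uvA False unfolding A_def by blast
      have posA: "\<forall>a\<in>A. \<forall>b\<in>A. a \<noteq> b \<longrightarrow> F \<sigma> a b > 0"
        using n metric_facts(3)[OF M] unfolding F_def by simp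
      define t where "t = bott A (F \<sigma>) u v"
      have t: "t > 0" unfolding t_def using bott_pos[OF arrived_fin[of \<sigma>, folded A_def] uvA False posA] .
      obtain xs where p: "rtrancl_path (edgeR A (F \<sigma>) t) u xs v" "distinct (u # xs)"
        using bott_path[OF arrived_fin[of \<sigma>, folded A_def] uvA False, of "F \<sigma>"] unfolding t_def by metis
      have "set (u # xs) \<subseteq> A" using path_set[OF p(1)] uvA by simp
      then have "card (set (u # xs)) \<le> card A" using arrived_fin unfolding A_def by (intro card_mono) auto
      then have len: "length xs + 1 \<le> n" using distinct_card[OF p(2)] upto_card[OF \<sigma>(1)] unfolding A_def by simp
      have edge: "\<forall>x y. edgeR A (F \<sigma>) t x y \<longrightarrow> d x y \<le> t / (real n - 1)"
        using n unfolding edgeR_def F_def by (auto simp: field_simps)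
      have "d u v \<le> real (length xs) * (t / (real n - 1))"
        using path_len[OF p(1) edge] metric_facts[OF M] by blast
      also have "\<dots> \<le> (real n - 1) * (t / (real n - 1))"
        using len t by (intro mult_right_mono) auto
      also have "\<dots> = t" using n by simp
      finally show ?thesis unfolding t_def A_def .
    qed
  qed
  have "has_distortion d (upto n) (\<lambda>\<sigma>. bott (arrived \<sigma>) (F \<sigma>)) (real n - 1)"
    unfolding has_distortion_def
  proof (intro ballI)
    fix \<sigma> :: "('a \<times> bool) list" and u v assume \<sigma>: "\<sigma> \<in> upto n" and uv: "u \<in> alive \<sigma>" "v \<in> alive \<sigma>"
    show "bott (arrived \<sigma>) (F \<sigma>) u v \<le> (real n - 1) * d u v"
    proof (cases "u = v")
      case True then show ?thesis using metric_facts[OF M] by (simp add: bott_def)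
    next
      case False
      have "u \<in> arrived \<sigma>" "v \<in> arrived \<sigma>" using uv alive_sub[of \<sigma>] by auto
      then show ?thesis using bott_le[OF arrived_fin _ _ False] unfolding F_def by blast
    qed
  qed
  then show ?thesis using ome by blast
qed



definition idx :: "('a \<times> bool) list \<Rightarrow> 'a \<Rightarrow> nat" where
  "idx \<sigma> v = card (arrived (takeWhile (\<lambda>q. q \<noteq> (v, True)) \<sigma>))"

lemma arrived_tw_sub: "arrived (takeWhile P \<sigma>) \<subseteq> arrived \<sigma>"
  unfolding arrived_def using set_takeWhileD by fastforce

lemma not_arrived_tw: "v \<notin> arrived (takeWhile (\<lambda>q. q \<noteq> (v, True)) \<sigma>)"
  unfolding arrived_def using set_takeWhileD by fastforce

lemma idx_lt: assumes "v \<in> arrived \<sigma>" shows "idx \<sigma> v < card (arrived \<sigma>)"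
proof -
  have "arrived (takeWhile (\<lambda>q. q \<noteq> (v, True)) \<sigma>) \<subset> arrived \<sigma>"
    using arrived_tw_sub[of "\<lambda>q. q \<noteq> (v, True)" \<sigma>] not_arrived_tw[of v \<sigma>] assms by blast
  then show ?thesis unfolding idx_def by (rule psubset_card_mono[OF arrived_fin])
qed

lemma pos_facts:
  assumes "v \<in> arrived \<sigma>"
  shows "length (takeWhile (\<lambda>q. q \<noteq> (v, True)) \<sigma>) < length \<sigma>"
    "\<sigma> ! length (takeWhile (\<lambda>q. q \<noteq> (v, True)) \<sigma>) = (v, True)"
proof -
  have "(v, True) \<in> set \<sigma>" using assms unfolding arrived_def by simp
  show l: "length (takeWhile (\<lambda>q. q \<noteq> (v, True)) \<sigma>) < length \<sigma>"
  proof (rule ccontr)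
    assume "\<not> ?thesis"
    then have "length (takeWhile (\<lambda>q. q \<noteq> (v, True)) \<sigma>) = length \<sigma>"
      using length_takeWhile_le[of _ \<sigma>] by (simp add: not_less le_antisym)
    then have "takeWhile (\<lambda>q. q \<noteq> (v, True)) \<sigma> = \<sigma>"
      using takeWhile_eq_take[of "\<lambda>q. q \<noteq> (v, True)" \<sigma>] by simp
    then show False using \<open>(v, True) \<in> set \<sigma>\<close> by auto
  qed
  show "\<sigma> ! length (takeWhile (\<lambda>q. q \<noteq> (v, True)) \<sigma>) = (v, True)"
    using nth_length_takeWhile[OF l] by simp
qed

lemma idx_less:
  assumes u: "u \<in> arrived \<sigma>" and v: "v \<in> arrived \<sigma>"
    and lt: "length (takeWhile (\<lambda>q. q \<noteq> (u, True)) \<sigma>) < length (takeWhile (\<lambda>q. q \<noteq> (v, True)) \<sigma>)"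
  shows "idx \<sigma> u < idx \<sigma> v"
proof -
  define i where "i = length (takeWhile (\<lambda>q. q \<noteq> (u, True)) \<sigma>)"
  define j where "j = length (takeWhile (\<lambda>q. q \<noteq> (v, True)) \<sigma>)"
  have tu: "takeWhile (\<lambda>q. q \<noteq> (u, True)) \<sigma> = take i \<sigma>" unfolding i_def by (rule takeWhile_eq_take)
  have tv: "takeWhile (\<lambda>q. q \<noteq> (v, True)) \<sigma> = take j \<sigma>" unfolding j_def by (rule takeWhile_eq_take)
  have ij: "i < j" using lt unfolding i_def j_def .
  have jl: "j < length \<sigma>" using pos_facts(1)[OF v] unfolding j_def .
  have ui: "\<sigma> ! i = (u, True)" using pos_facts(2)[OF u] unfolding i_def .
  have "(u, True) \<in> set (take j \<sigma>)"
    using ij jl ui by (metis in_set_conv_nth length_take min.absorb4 nth_take order.strict_trans)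
  then have "u \<in> arrived (take j \<sigma>)" unfolding arrived_def by simp
  moreover have "u \<notin> arrived (take i \<sigma>)" using not_arrived_tw[of u \<sigma>] tu by simp
  moreover have "arrived (take i \<sigma>) \<subseteq> arrived (take j \<sigma>)"
    unfolding arrived_def using set_take_subset_set_take[of i j \<sigma>] ij by auto
  ultimately have "arrived (take i \<sigma>) \<subset> arrived (take j \<sigma>)" by blast
  then have "card (arrived (take i \<sigma>)) < card (arrived (take j \<sigma>))" by (rule psubset_card_mono[OF arrived_fin])
  then show ?thesis unfolding idx_def tu tv .
qed

lemma idx_inj: "inj_on (idx \<sigma>) (arrived \<sigma>)"
proof (rule inj_onI)
  fix u v assume u: "u \<in> arrived \<sigma>" and v: "v \<in> arrived \<sigma>" and e: "idx \<sigma> u = idx \<sigma> v"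
  show "u = v"
  proof (rule ccontr)
    assume ne: "u \<noteq> v"
    define i where "i = length (takeWhile (\<lambda>q. q \<noteq> (u, True)) \<sigma>)"
    define j where "j = length (takeWhile (\<lambda>q. q \<noteq> (v, True)) \<sigma>)"
    have "i \<noteq> j" using pos_facts(2)[OF u] pos_facts(2)[OF v] ne unfolding i_def j_def by auto
    then have "i < j \<or> j < i" by auto
    then show False using idx_less[OF u v] idx_less[OF v u] e unfolding i_def j_def by auto
  qed
qed

lemma idx_stable: assumes "v \<in> arrived \<sigma>" shows "idx (\<sigma> @ \<tau>) v = idx \<sigma> v"
proof -
  have "(v, True) \<in> set \<sigma>" using assms unfolding arrived_def by simp
  then have "takeWhile (\<lambda>q. q \<noteq> (v, True)) (\<sigma> @ \<tau>) = takeWhile (\<lambda>q. q \<noteq> (v, True)) \<sigma>"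
    by (intro takeWhile_append1) auto
  then show ?thesis unfolding idx_def by simp
qed

lemma idx_butlast: assumes "\<sigma> \<noteq> []" "v \<in> arrived (butlast \<sigma>)" shows "idx \<sigma> v = idx (butlast \<sigma>) v"
proof -
  have "\<sigma> = butlast \<sigma> @ [last \<sigma>]" using assms(1) by simp
  then have "idx \<sigma> v = idx (butlast \<sigma> @ [last \<sigma>]) v" by simp
  also have "\<dots> = idx (butlast \<sigma>) v" by (rule idx_stable[OF assms(2)])
  finally show ?thesis .
qed

lemma part3:
  fixes d :: "'a \<Rightarrow> 'a \<Rightarrow> real"
  assumes M: "is_metric d"
  shows "\<exists>E. online_monotone_embedding d UNIV E \<and>
            (\<forall>n\<ge>256. has_distortion d (upto n) E (32 * real n * ln (real n) * (ln (ln (real n))) ^ 2))"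
proof -
  define F where "F \<sigma> a b = 2 * gg (max (idx \<sigma> a) (idx \<sigma> b)) * d a b" for \<sigma> :: "('a \<times> bool) list" and a b
  have ome: "online_monotone_embedding d UNIV (\<lambda>\<sigma>. bott (arrived \<sigma>) (F \<sigma>))"
  proof (rule ome_bott)
    show "F \<sigma> a b = F \<sigma> b a" for \<sigma> a b unfolding F_def using metric_facts(4)[OF M, of a b] by (simp add: max.commute)
    show "F \<sigma> a b > 0" if "a \<noteq> b" for \<sigma> a b
      using metric_facts(3)[OF M that] gg_pos unfolding F_def by simp
    show "F \<sigma> a b = F (butlast \<sigma>) a b" if "\<sigma> \<noteq> []" "a \<in> arrived (butlast \<sigma>)" "b \<in> arrived (butlast \<sigma>)" for \<sigma> a b
      unfolding F_def using idx_butlast[OF that(1,2)] idx_butlast[OF that(1,3)] by simp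
    show "d u v \<le> bott (arrived \<sigma>) (F \<sigma>) u v"
      if \<sigma>: "\<sigma> \<noteq> []" and uv: "u \<in> alive \<sigma>" "v \<in> alive \<sigma>" for \<sigma> u v
    proof (cases "u = v")
      case True then show ?thesis using metric_facts[OF M] by (simp add: bott_def)
    next
      case False
      define A where "A = arrived \<sigma>"
      have finA: "finite A" unfolding A_def by (rule arrived_fin)
      have uvA: "u \<in> A" "v \<in> A" using uv alive_sub[of \<sigma>] unfolding A_def by auto
      have posA: "\<forall>a\<in>A. \<forall>b\<in>A. a \<noteq> b \<longrightarrow> F \<sigma> a b > 0"
        using metric_facts(3)[OF M] gg_pos unfolding F_def by simp
      define t where "t = bott A (F \<sigma>) u v"
      have t: "t > 0" unfolding t_def using bott_pos[OF finA uvA False posA] .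
      obtain xs where p: "rtrancl_path (edgeR A (F \<sigma>) t) u xs v" "distinct (u # xs)"
        using bott_path[OF finA uvA False, of "F \<sigma>"] unfolding t_def by metis
      have setA: "set (u # xs) \<subseteq> A" using path_set[OF p(1)] uvA by simp
      define h where "h x = 1 / (2 * gg (idx \<sigma> x))" for x
      have hnn: "\<forall>x. h x \<ge> 0" unfolding h_def using gg_pos by (simp add: less_imp_le)
      have edge: "\<forall>x y. edgeR A (F \<sigma>) t x y \<longrightarrow> d x y \<le> t * (h x + h y)"
      proof (intro allI impI)
        fix x y assume e: "edgeR A (F \<sigma>) t x y"
        define m where "m = max (idx \<sigma> x) (idx \<sigma> y)"
        have gm: "gg m > 0" by (rule gg_pos)
        have "2 * gg m * d x y \<le> t" using e unfolding edgeR_def F_def m_def by simp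
        then have "d x y \<le> t * (1 / (2 * gg m))" using gm by (simp add: field_simps)
        moreover have "1 / (2 * gg m) \<le> h x + h y"
          using hnn unfolding m_def h_def max_def by (auto simp: add_increasing add_increasing2)
        ultimately show "d x y \<le> t * (h x + h y)"
          using t by (meson mult_left_mono less_imp_le order_trans)
      qed
      have "d u v \<le> t * (h u + 2 * sum h (set xs))"
        using path_sum[OF p edge] metric_facts[OF M] hnn t by auto
      also have "\<dots> \<le> t * (2 * sum h (set (u # xs)))"
      proof -
        have "u \<notin> set xs" using p(2) by simp
        then have "sum h (set (u # xs)) = h u + sum h (set xs)" by simp
        then show ?thesis using t hnn by (intro mult_left_mono) auto
      qed
      also have "2 * sum h (set (u # xs)) = (\<Sum>x\<in>set (u # xs). 1 / gg (idx \<sigma> x))"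
        unfolding h_def sum_distrib_left by (intro sum.cong) auto
      also have "\<dots> = (\<Sum>m\<in>idx \<sigma> ` set (u # xs). 1 / gg m)"
        using sum.reindex[OF inj_on_subset[OF idx_inj setA[unfolded A_def]], of "\<lambda>m. 1 / gg m"]
        unfolding comp_def by (rule sym)
      also have "\<dots> \<le> (\<Sum>m<card A. 1 / gg m)"
      proof (rule sum_mono2)
        show "finite {..<card A}" by simp
        show "idx \<sigma> ` set (u # xs) \<subseteq> {..<card A}" using idx_lt setA unfolding A_def by fastforce
        show "0 \<le> 1 / gg b" for b using gg_pos[of b] by simp
      qed
      also have "\<dots> \<le> 1" by (rule gg_sum)
      finally have "d u v \<le> t * 1" using t by (simp add: mult_left_mono)
      then show ?thesis unfolding t_def A_def by simp
    qed
  qed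
  have "has_distortion d (upto n) (\<lambda>\<sigma>. bott (arrived \<sigma>) (F \<sigma>)) (32 * real n * ln (real n) * (ln (ln (real n))) ^ 2)"
    if n: "n \<ge> 256" for n
    unfolding has_distortion_def
  proof (intro ballI)
    fix \<sigma> :: "('a \<times> bool) list" and u v assume \<sigma>: "\<sigma> \<in> upto n" and uv: "u \<in> alive \<sigma>" "v \<in> alive \<sigma>"
    show "bott (arrived \<sigma>) (F \<sigma>) u v \<le> (32 * real n * ln (real n) * (ln (ln (real n))) ^ 2) * d u v"
    proof (cases "u = v")
      case True then show ?thesis using metric_facts[OF M] by (simp add: bott_def)
    next
      case False
      have ua: "u \<in> arrived \<sigma>" and va: "v \<in> arrived \<sigma>" using uv alive_sub[of \<sigma>] by auto
      have "bott (arrived \<sigma>) (F \<sigma>) u v \<le> F \<sigma> u v" by (rule bott_le[OF arrived_fin ua va False])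
      also have "\<dots> \<le> (32 * real n * ln (real n) * (ln (ln (real n))) ^ 2) * d u v"
      proof -
        have "max (idx \<sigma> u) (idx \<sigma> v) < n"
          using idx_lt[OF ua] idx_lt[OF va] upto_card[OF \<sigma>] by simp
        then have "2 * gg (max (idx \<sigma> u) (idx \<sigma> v)) \<le> 32 * real n * ln (real n) * (ln (ln (real n))) ^ 2"
          using gg_bound n by blast
        then show ?thesis unfolding F_def using metric_facts(2)[OF M] by (intro mult_right_mono) auto
      qed
      finally show ?thesis .
    qed
  qed
  then show ?thesis using ome by blast
qed



lemma ome_ultra:
  assumes "online_monotone_embedding d S E" "\<sigma> \<in> S" "\<sigma> \<noteq> []"
  shows "\<forall>x\<in>alive \<sigma>. E \<sigma> x x = 0"
    "\<forall>x\<in>alive \<sigma>. \<forall>y\<in>alive \<sigma>. \<forall>z\<in>alive \<sigma>. E \<sigma> x z \<le> max (E \<sigma> x y) (E \<sigma> y z)"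
    "\<forall>u\<in>alive \<sigma>. \<forall>v\<in>alive \<sigma>. d u v \<le> E \<sigma> u v"
proof -
  have h: "in_HSTs (alive \<sigma>) (E \<sigma>)" "\<forall>u\<in>alive \<sigma>. \<forall>v\<in>alive \<sigma>. d u v \<le> E \<sigma> u v"
    using assms unfolding online_monotone_embedding_def by blast+
  obtain \<mu> where mu: "\<mu> \<ge> 1" "is_muHST \<mu> (alive \<sigma>) (E \<sigma>)" using h(1) unfolding in_HSTs_def by auto
  show "\<forall>x\<in>alive \<sigma>. E \<sigma> x x = 0"
    "\<forall>x\<in>alive \<sigma>. \<forall>y\<in>alive \<sigma>. \<forall>z\<in>alive \<sigma>. E \<sigma> x z \<le> max (E \<sigma> x y) (E \<sigma> y z)"
    using hst_props[OF mu(2,1)] by auto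
  show "\<forall>u\<in>alive \<sigma>. \<forall>v\<in>alive \<sigma>. d u v \<le> E \<sigma> u v" by (fact h(2))
qed

lemma chain:
  assumes ult: "\<forall>x\<in>L. \<forall>y\<in>L. \<forall>z\<in>L. U x z \<le> max (U x y) (U y z)"
    and inL: "\<forall>i\<le>Suc m. y i \<in> L" and st: "\<forall>i\<le>m. U (y i) (y (Suc i)) \<le> (B::real)"
  shows "U (y 0) (y (Suc m)) \<le> B"
  using inL st
proof (induction m)
  case 0 then show ?case by simp
next
  case (Suc m)
  have "U (y 0) (y (Suc m)) \<le> B" using Suc by simp
  moreover have "U (y (Suc m)) (y (Suc (Suc m))) \<le> B" using Suc.prems(2) by simp
  moreover have "U (y 0) (y (Suc (Suc m))) \<le> max (U (y 0) (y (Suc m))) (U (y (Suc m)) (y (Suc (Suc m))))"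
    using ult Suc.prems(1) by simp
  ultimately show ?case by simp
qed

lemma alive_app_arr: "alive (\<sigma> @ map (\<lambda>x. (x, True)) ys) = alive \<sigma> \<union> set ys"
proof (induction ys rule: rev_induct)
  case Nil then show ?case by simp
next
  case (snoc y ys)
  have "alive (\<sigma> @ map (\<lambda>x. (x, True)) (ys @ [y])) = alive ((\<sigma> @ map (\<lambda>x. (x, True)) ys) @ [(y, True)])"
    by simp
  also have "\<dots> = insert y (alive (\<sigma> @ map (\<lambda>x. (x, True)) ys))" by (rule alive_snoc)
  finally show ?case using snoc by auto
qed

lemma alive_arr: "alive (map (\<lambda>x. (x, True)) ys) = set ys"
  using alive_app_arr[of "[]" ys] by (simp add: alive_def)

definition absd :: "real \<Rightarrow> real \<Rightarrow> real" where "absd x y = \<bar>x - y\<bar>"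

lemma absd_metric: "is_metric absd"
  unfolding is_metric_def absd_def by auto

lemma part2:
  assumes n: "n \<ge> 2" and lam: "lam < real n - 1"
  shows "\<exists>d::real \<Rightarrow> real \<Rightarrow> real. is_metric d \<and>
          (\<forall>E. online_monotone_embedding d (upto n) E \<longrightarrow> \<not> has_distortion d (upto n) E lam)"
proof (intro exI[of _ absd] conjI allI impI absd_metric notI)
  fix E assume ome: "online_monotone_embedding absd (upto n) E" and hd: "has_distortion absd (upto n) E lam"
  define \<sigma> where "\<sigma> = map (\<lambda>x. (x, True)) (map real [0..<n])"
  have \<sigma>S: "\<sigma> \<in> upto n" unfolding \<sigma>_def upto_def by (simp add: comp_def)
  have \<sigma>ne: "\<sigma> \<noteq> []" unfolding \<sigma>_def using n by simp
  have al: "alive \<sigma> = real ` {..<n}" unfolding \<sigma>_def alive_arr by auto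
  define m where "m = n - 2"
  have nm: "n = Suc (Suc m)" unfolding m_def using n by simp
  have inL: "\<forall>i\<le>Suc m. real i \<in> alive \<sigma>" unfolding al nm by (intro allI impI imageI) simp
  have st: "\<forall>i\<le>m. E \<sigma> (real i) (real (Suc i)) \<le> lam"
  proof (intro allI impI)
    fix i assume "i \<le> m"
    then have "real i \<in> alive \<sigma>" "real (Suc i) \<in> alive \<sigma>" unfolding al nm by (intro imageI; simp)+
    then have "E \<sigma> (real i) (real (Suc i)) \<le> lam * absd (real i) (real (Suc i))"
      using hd \<sigma>S unfolding has_distortion_def by blast
    then show "E \<sigma> (real i) (real (Suc i)) \<le> lam" unfolding absd_def by simp
  qed
  have "E \<sigma> (real 0) (real (Suc m)) \<le> lam"
    using chain[OF ome_ultra(2)[OF ome \<sigma>S \<sigma>ne] inL st] .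
  moreover have "absd (real 0) (real (Suc m)) \<le> E \<sigma> (real 0) (real (Suc m))"
  proof -
    have "real 0 \<in> alive \<sigma>" "real (Suc m) \<in> alive \<sigma>" using inL by blast+
    then show ?thesis using ome_ultra(3)[OF ome \<sigma>S \<sigma>ne] by blast
  qed
  ultimately show False using lam unfolding absd_def nm by simp
qed

lemma part4:
  "\<exists>(c::real) (k::nat). c > 0 \<and>
       (\<exists>d::real \<Rightarrow> real \<Rightarrow> real. is_metric d \<and>
          (\<forall>E. online_monotone_embedding d UNIV E \<longrightarrow>
               (\<forall>N0::nat. \<exists>n. n \<ge> N0 \<and> n \<ge> 3 \<and>
                  \<not> has_distortion d (upto n) E
                      (real n * ln (real n) / (c * (ln (ln (real n))) ^ k)))))"
proof (rule exI[of _ "1::real"], rule exI[of _ "0::nat"], intro conjI exI[of _ absd] absd_metric allI impI)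
  show "(0::real) < 1" by simp
  fix E N0 assume ome: "online_monotone_embedding absd UNIV E"
  show "\<exists>n. n \<ge> N0 \<and> n \<ge> 3 \<and> \<not> has_distortion absd (upto n) E
                      (real n * ln (real n) / (1 * (ln (ln (real n))) ^ 0))"
  proof (rule ccontr)
    assume "\<not> ?thesis"
    then have H: "has_distortion absd (upto n) E (real n * ln (real n))" if "n \<ge> N0" "n \<ge> 3" for n
      using that by auto
    define T0 where "T0 = N0 + 3"
    define T where "T = T0 + 2"
    define D where "D i = real (T + i) * ln (real (T + i))" for i
    obtain K where K: "(\<Sum>i<K. 1 / D i) > 1" using nlogn_div[of T] unfolding D_def T_def by auto
    define S where "S = (\<Sum>i<K. 1 / D i)"
    have S1: "S > 1" using K unfolding S_def .
    have Dpos: "D i > 0" for i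
    proof -
      have "real (T + i) > 1" unfolding T_def T0_def by simp
      then show ?thesis unfolding D_def by simp
    qed
    have "K \<noteq> 0" using K by (cases K) auto
    then obtain K' where K': "K = Suc K'" by (cases K) auto
    define w where "w i = 1 / (D i * S)" for i
    define y where "y j = (\<Sum>i<j. w i)" for j
    have wnn: "w i \<ge> 0" for i unfolding w_def using Dpos[of i] S1 by simp
    have ySuc: "y (Suc j) = y j + w j" for j unfolding y_def by simp
    define pre where "pre j = replicate T0 (0::real, True) @ map (\<lambda>x. (x, True)) (map y [0..<Suc j])" for j
    have pre_alive: "y i \<in> alive (pre j)" if "i \<le> j" for i j
    proof -
      have "i \<in> set [0..<Suc j]" using that by auto
      then have "y i \<in> set (map y [0..<Suc j])" unfolding set_map by (rule imageI)
      then show ?thesis unfolding pre_def alive_app_arr by blast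
    qed
    have pre_upto: "pre j \<in> upto (T0 + Suc j)" for j
      unfolding pre_def upto_def by (simp add: comp_def)
    have pre_ne: "pre j \<noteq> []" for j unfolding pre_def by simp
    have pre_Suc: "pre (Suc j) = pre j @ [(y (Suc j), True)]" for j unfolding pre_def by simp
    have alive_mono: "alive (pre j) \<subseteq> alive (pre (j + k))" for j k
    proof (induction k)
      case 0 then show ?case by simp
    next
      case (Suc k)
      have "alive (pre (j + Suc k)) = insert (y (Suc (j + k))) (alive (pre (j + k)))"
        using pre_Suc[of "j + k"] alive_snoc[of "pre (j + k)"] by simp
      then show ?case using Suc.IH by auto
    qed
    have omeM: "\<forall>\<sigma>. \<sigma> \<noteq> [] \<longrightarrow> (\<forall>u\<in>alive \<sigma> \<inter> alive (butlast \<sigma>). \<forall>v\<in>alive \<sigma> \<inter> alive (butlast \<sigma>).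
            E \<sigma> u v \<le> E (butlast \<sigma>) u v)"
      using ome unfolding online_monotone_embedding_def by blast
    have mono: "E (pre (j + k)) u v \<le> E (pre j) u v" if uv: "u \<in> alive (pre j)" "v \<in> alive (pre j)" for j k u v
    proof (induction k)
      case 0 then show ?case by simp
    next
      case (Suc k)
      have a1: "u \<in> alive (pre (j + k))" "v \<in> alive (pre (j + k))" using alive_mono[of j k] uv by auto
      have a2: "u \<in> alive (pre (j + Suc k))" "v \<in> alive (pre (j + Suc k))" using alive_mono[of j "Suc k"] uv by auto
      have bl: "butlast (pre (j + Suc k)) = pre (j + k)" using pre_Suc[of "j + k"] by simp
      have "E (pre (j + Suc k)) u v \<le> E (pre (j + k)) u v"
        using omeM[rule_format, OF pre_ne[of "j + Suc k"]] a1 a2 unfolding bl by blast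
      then show ?case using Suc.IH by linarith
    qed
    have step: "E (pre K) (y i) (y (Suc i)) \<le> 1 / S" if i: "i \<le> K'" for i
    proof -
      define n where "n = T + i"
      have n: "n \<ge> N0" "n \<ge> 3" unfolding n_def T_def T0_def by auto
      have "pre (Suc i) \<in> upto n" using pre_upto[of "Suc i"] unfolding n_def T_def by simp
      moreover have "y i \<in> alive (pre (Suc i))" "y (Suc i) \<in> alive (pre (Suc i))" using pre_alive by auto
      ultimately have "E (pre (Suc i)) (y i) (y (Suc i)) \<le> (real n * ln (real n)) * absd (y i) (y (Suc i))"
        using H[OF n] unfolding has_distortion_def by blast
      also have "\<dots> = D i * w i" unfolding n_def D_def absd_def using ySuc[of i] wnn[of i] by simp
      also have "\<dots> = 1 / S" unfolding w_def using Dpos[of i] S1 by simp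
      finally have e1: "E (pre (Suc i)) (y i) (y (Suc i)) \<le> 1 / S" .
      have "E (pre (Suc i + (K - Suc i))) (y i) (y (Suc i)) \<le> E (pre (Suc i)) (y i) (y (Suc i))"
        by (rule mono) (auto intro: pre_alive)
      moreover have "Suc i + (K - Suc i) = K" using i K' by simp
      ultimately show ?thesis using e1 by simp
    qed
    have U: "\<forall>x\<in>alive (pre K). \<forall>y\<in>alive (pre K). \<forall>z\<in>alive (pre K). E (pre K) x z \<le> max (E (pre K) x y) (E (pre K) y z)"
      using ome_ultra(2)[OF ome _ pre_ne] by blast
    have inL: "\<forall>i\<le>Suc K'. y i \<in> alive (pre K)" using pre_alive K' by auto
    have "E (pre K) (y 0) (y (Suc K')) \<le> 1 / S"
      using chain[OF U inL] step by blast
    moreover have "absd (y 0) (y K) \<le> E (pre K) (y 0) (y K)"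
      using ome_ultra(3)[OF ome _ pre_ne] pre_alive by blast
    moreover have "y K = 1"
    proof -
      have "y K = (\<Sum>i<K. (1 / D i) / S)" unfolding y_def w_def by simp
      also have "\<dots> = S / S" unfolding S_def by (rule sum_divide_distrib[symmetric])
      finally show ?thesis using S1 by simp
    qed
    moreover have "y 0 = 0" unfolding y_def by simp
    ultimately have "1 \<le> 1 / S" using K' unfolding absd_def by simp
    then show False using S1 by (simp add: divide_less_eq)
  qed
qed


theorem mainTheorem2:
  shows
   "(\<forall>(n::nat) (d::'a \<Rightarrow> 'a \<Rightarrow> real). is_metric d \<longrightarrow>
       (\<exists>E. online_monotone_embedding d (upto n) E \<and>
            has_distortion d (upto n) E (real n - 1)))
  \<and> (\<forall>(n::nat) (lam::real). n \<ge> 2 \<longrightarrow> lam < real n - 1 \<longrightarrow>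
       (\<exists>d::real \<Rightarrow> real \<Rightarrow> real. is_metric d \<and>
          (\<forall>E. online_monotone_embedding d (upto n) E \<longrightarrow>
               \<not> has_distortion d (upto n) E lam)))
  \<and> (\<exists>(c::real) (k::nat) (N0::nat). c > 0 \<and>
       (\<forall>d::'a \<Rightarrow> 'a \<Rightarrow> real. is_metric d \<longrightarrow>
          (\<exists>E. online_monotone_embedding d UNIV E \<and>
               (\<forall>n\<ge>N0. has_distortion d (upto n) E
                   (c * real n * ln (real n) * (ln (ln (real n))) ^ k)))))
  \<and> (\<exists>(c::real) (k::nat). c > 0 \<and>
       (\<exists>d::real \<Rightarrow> real \<Rightarrow> real. is_metric d \<and>
          (\<forall>E. online_monotone_embedding d UNIV E \<longrightarrow>
               (\<forall>N0::nat. \<exists>n. n \<ge> N0 \<and> n \<ge> 3 \<and>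
                  \<not> has_distortion d (upto n) E
                      (real n * ln (real n) / (c * (ln (ln (real n))) ^ k))))))"
proof (intro conjI)
  show "\<forall>(n::nat) (d::'a \<Rightarrow> 'a \<Rightarrow> real). is_metric d \<longrightarrow>
       (\<exists>E. online_monotone_embedding d (upto n) E \<and>
            has_distortion d (upto n) E (real n - 1))"
    using part1 by blast
  show "\<forall>(n::nat) (lam::real). n \<ge> 2 \<longrightarrow> lam < real n - 1 \<longrightarrow>
       (\<exists>d::real \<Rightarrow> real \<Rightarrow> real. is_metric d \<and>
          (\<forall>E. online_monotone_embedding d (upto n) E \<longrightarrow>
               \<not> has_distortion d (upto n) E lam))"
    using part2 by blast
  show "\<exists>(c::real) (k::nat) (N0::nat). c > 0 \<and>
       (\<forall>d::'a \<Rightarrow> 'a \<Rightarrow> real. is_metric d \<longrightarrow>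
          (\<exists>E. online_monotone_embedding d UNIV E \<and>
               (\<forall>n\<ge>N0. has_distortion d (upto n) E
                   (c * real n * ln (real n) * (ln (ln (real n))) ^ k))))"
  proof (rule exI[of _ 32], rule exI[of _ 2], rule exI[of _ 256], intro conjI allI impI)
    show "(0::real) < 32" by simp
    fix d :: "'a \<Rightarrow> 'a \<Rightarrow> real" assume "is_metric d"
    then show "\<exists>E. online_monotone_embedding d UNIV E \<and>
               (\<forall>n\<ge>256. has_distortion d (upto n) E
                   (32 * real n * ln (real n) * (ln (ln (real n))) ^ 2))"
      by (rule part3)
  qed
  show "\<exists>(c::real) (k::nat). c > 0 \<and>
       (\<exists>d::real \<Rightarrow> real \<Rightarrow> real. is_metric d \<and>
          (\<forall>E. online_monotone_embedding d UNIV E \<longrightarrow>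
               (\<forall>N0::nat. \<exists>n. n \<ge> N0 \<and> n \<ge> 3 \<and>
                  \<not> has_distortion d (upto n) E
                      (real n * ln (real n) / (c * (ln (ln (real n))) ^ k)))))"
    by (rule part4)
qed

end
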